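(* Let $k$ be a positive integer. In $\mathfrak{h}^1_t[[u]]$, $$S_t\left(\frac{1}{1-z_ku}\right)=\frac{1}{1-\sum_{i=2}^\infty t^{i-2}(t-1)z_{ik}u^i}\ast S\left(\frac{1}{1-z_ku}\right).$$ In particular, for any integer $n\ge0$, $$S_t(z_k^n)=S(z_k^n)+\sum_{j=2}^n\sum_{m=1}^{\lfloor j/2\rfloor}t^{j-2m}(t-1)^m\Big(\sum_{\substack{i_1+\cdots+i_m=j\\ i_1,\ldots,i_m\ge2}}z_{i_1k}\cdots z_{i_mk}\Big)\ast S(z_k^{n-j}),$$ and if $k\ge2$, $$\zeta^t(\{k\}^n)=\zeta^\star(\{k\}^n)+\sum_{j=2}^n\sum_{m=1}^{\lfloor j/2\rfloor}t^{j-2m}(t-1)^m\Big(\sum_{\substack{i_1+\cdots+i_m=j\\ i_1,\ldots,i_m\ge2}}\zeta(i_1k,\ldots,i_mk)\Big)\zeta^\star(\{k\}^{n-j}).$$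
   Context: $t,u$ are commuting variables. $\mathfrak{h}_t=\mathbb{Q}[t]\langle x,y\rangle$ ($1$ = empty word), $\mathfrak{h}^1_t=\mathbb{Q}[t]+\mathfrak{h}_ty$, $z_k=x^{k-1}y$; for $X$ without constant term $\frac1{1-X}=\sum_{n\ge0}X^n$ with concatenation powers. For a parameter $s$, $\sigma_s$ is the algebra automorphism with $\sigma_s(x)=x,\sigma_s(y)=sx+y$ and $S_s$ is the linear map with $S_s(1)=1$, $S_s(wa)=\sigma_s(w)a$ for words $w$ and letters $a$; $S:=S_1$. The harmonic product $\ast$ on $\mathfrak{h}^1_t$ is the $\mathbb{Q}[t]$-bilinear product with $1\ast w=w\ast1=w$ and $z_kw_1\ast z_lw_2=z_k(w_1\ast z_lw_2)+z_l(z_kw_1\ast w_2)+z_{k+l}(w_1\ast w_2)$ for words $w_1,w_2\in\mathfrak{h}^1_t$, extended coefficientwise to power series in $u$. $\{k\}^n$ is $n$ repetitions of $k$; values at the empty index are $1$. For $k_1\ge2$, $\zeta(k_1,\ldots,k_n)=\sum_{m_1>\cdots>m_n>0}\prod m_j^{-k_j}$, $\zeta^\star(k_1,\ldots,k_n)=\sum_{m_1\ge\cdots\ge m_n>0}\prod m_j^{-k_j}$, $\zeta^t(k_1,\ldots,k_n)=\sum_{\mathbf p}t^{n-\mathrm{dep}(\mathbf p)}\zeta(\mathbf p)$ over sequences $\mathbf p$ obtained from $(k_1,\ldots,k_n)$ by replacing each separating comma by a comma or a plus sign ($\mathrm{dep}$ = length). *)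

theory Defs
  imports "HOL-Analysis.Analysis" "HOL-Computational_Algebra.Polynomial"
begin

datatype letter = Lx | Ly

type_synonym word = "letter list"

text \<open>An element of h_t is represented by its coefficient function
  (words to Q[t]); all elements used below are finitely supported.\<close>
type_synonym nc = "word \<Rightarrow> rat poly"

definition nc_zero :: nc where "nc_zero = (\<lambda>_. 0)"
definition nc_add :: "nc \<Rightarrow> nc \<Rightarrow> nc" where "nc_add f g = (\<lambda>w. f w + g w)"
definition nc_smult :: "rat poly \<Rightarrow> nc \<Rightarrow> nc" where "nc_smult c f = (\<lambda>w. c * f w)"

definition wd :: "word \<Rightarrow> nc" where "wd u = (\<lambda>v. if v = u then 1 else 0)"

definition cat :: "nc \<Rightarrow> nc \<Rightarrow> nc" where
  "cat f g = (\<lambda>w. \<Sum>i\<le>length w. f (take i w) * g (drop i w))"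

definition supp :: "nc \<Rightarrow> word set" where "supp f = {w. f w \<noteq> 0}"

definition lin :: "(word \<Rightarrow> nc) \<Rightarrow> nc \<Rightarrow> nc" where
  "lin B f = (\<lambda>v. \<Sum>w\<in>supp f. f w * B w v)"

definition tvar :: "rat poly" where "tvar = [:0, 1:]"

fun sigma_letter :: "rat poly \<Rightarrow> letter \<Rightarrow> nc" where
  "sigma_letter s Lx = wd [Lx]"
| "sigma_letter s Ly = nc_add (nc_smult s (wd [Lx])) (wd [Ly])"

fun sigma_word :: "rat poly \<Rightarrow> word \<Rightarrow> nc" where
  "sigma_word s [] = wd []"
| "sigma_word s (a # w) = cat (sigma_letter s a) (sigma_word s w)"

definition sigma :: "rat poly \<Rightarrow> nc \<Rightarrow> nc" where "sigma s = lin (sigma_word s)"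

definition S_word :: "rat poly \<Rightarrow> word \<Rightarrow> nc" where
  "S_word s w = (if w = [] then wd [] else cat (sigma_word s (butlast w)) (wd [last w]))"

definition S_map :: "rat poly \<Rightarrow> nc \<Rightarrow> nc" where "S_map s = lin (S_word s)"

definition z :: "nat \<Rightarrow> word" where "z k = replicate (k - 1) Lx @ [Ly]"

definition zw :: "nat \<Rightarrow> nc" where "zw k = wd (z k)"

definition zs :: "nat list \<Rightarrow> word" where "zs ks = concat (map z ks)"

text \<open>decomposition of a word of h^1 into its z-indices\<close>
fun idx_aux :: "nat \<Rightarrow> word \<Rightarrow> nat list" where
  "idx_aux c [] = []"
| "idx_aux c (Lx # w) = idx_aux (Suc c) w"
| "idx_aux c (Ly # w) = Suc c # idx_aux 0 w"

definition idx :: "word \<Rightarrow> nat list" where "idx w = idx_aux 0 w"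

fun harm_idx :: "nat list \<Rightarrow> nat list \<Rightarrow> nc" where
  "harm_idx [] l = wd (zs l)"
| "harm_idx k [] = wd (zs k)"
| "harm_idx (a # k) (b # l) =
     nc_add (nc_add (cat (zw a) (harm_idx k (b # l))) (cat (zw b) (harm_idx (a # k) l)))
            (cat (zw (a + b)) (harm_idx k l))"

definition hprod :: "nc \<Rightarrow> nc \<Rightarrow> nc" where
  "hprod f g = (\<lambda>x. \<Sum>v\<in>supp f. \<Sum>w\<in>supp g. f v * g w * harm_idx (idx v) (idx w) x)"

type_synonym ser = "nat \<Rightarrow> nc"  \<comment> \<open>n-th coefficient = coefficient of u^n\<close>

definition ser_one :: ser where "ser_one = (\<lambda>n. if n = 0 then wd [] else nc_zero)"

definition ser_cat :: "ser \<Rightarrow> ser \<Rightarrow> ser" where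
  "ser_cat A B = (\<lambda>n w. \<Sum>i\<le>n. cat (A i) (B (n - i)) w)"

fun ser_pow :: "ser \<Rightarrow> nat \<Rightarrow> ser" where
  "ser_pow A 0 = ser_one"
| "ser_pow A (Suc m) = ser_cat A (ser_pow A m)"

text \<open>1/(1-X) = sum of concatenation powers X^m, for X without constant term
  (X^m only contributes to u^n for m \<le> n)\<close>
definition geom :: "ser \<Rightarrow> ser" where
  "geom A = (\<lambda>n w. \<Sum>m\<le>n. ser_pow A m n w)"

definition ser_harm :: "ser \<Rightarrow> ser \<Rightarrow> ser" where
  "ser_harm A B = (\<lambda>n w. \<Sum>i\<le>n. hprod (A i) (B (n - i)) w)"

definition ser_S :: "rat poly \<Rightarrow> ser \<Rightarrow> ser" where
  "ser_S s A = (\<lambda>n. S_map s (A n))"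

definition zu :: "nat \<Rightarrow> ser" where "zu k = (\<lambda>n. if n = 1 then zw k else nc_zero)"

definition Xser :: "nat \<Rightarrow> ser" where
  "Xser k = (\<lambda>i. if 2 \<le> i then nc_smult (tvar ^ (i - 2) * (tvar - 1)) (zw (i * k)) else nc_zero)"

definition comps :: "nat \<Rightarrow> nat \<Rightarrow> nat list set" where
  "comps m j = {is. length is = m \<and> sum_list is = j \<and> (\<forall>i\<in>set is. 2 \<le> i)}"

definition mzv :: "nat list \<Rightarrow> real" where
  "mzv ks = infsum (\<lambda>ms. \<Prod>j<length ks. 1 / real (ms ! j) ^ (ks ! j))
     {ms. length ms = length ks \<and> sorted_wrt (>) ms \<and> (\<forall>m\<in>set ms. 0 < m)}"

definition mzv_star :: "nat list \<Rightarrow> real" where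
  "mzv_star ks = infsum (\<lambda>ms. \<Prod>j<length ks. 1 / real (ms ! j) ^ (ks ! j))
     {ms. length ms = length ks \<and> sorted_wrt (\<ge>) ms \<and> (\<forall>m\<in>set ms. 0 < m)}"

text \<open>all sequences obtained by replacing each comma by a comma or a plus sign\<close>
fun coarsen :: "nat list \<Rightarrow> nat list list" where
  "coarsen [] = [[]]"
| "coarsen [k] = [[k]]"
| "coarsen (k # l # ks) =
     map (\<lambda>p. k # p) (coarsen (l # ks)) @ map (\<lambda>p. (k + hd p) # tl p) (coarsen (l # ks))"

definition mzv_t :: "nat list \<Rightarrow> real poly" where
  "mzv_t ks = (\<Sum>p\<leftarrow>coarsen ks. monom (mzv p) (length ks - length p))"

end

theory Submission
  imports Defs "HOL-Library.Function_Algebras"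
begin


lemma sum_fun_apply: "sum f A x = (\<Sum>a\<in>A. f a x)"
  by (induction A rule: infinite_finite_induct) auto

lemma nc_add_eq: "nc_add f g = f + g" by (simp add: nc_add_def fun_eq_iff)
lemma nc_zero_eq: "nc_zero = 0" by (simp add: nc_zero_def fun_eq_iff)

lemma smult_apply[simp]: "nc_smult c f w = c * f w" by (simp add: nc_smult_def)
lemma smult_add2: "nc_smult c (f + g) = nc_smult c f + nc_smult c g"
  by (simp add: fun_eq_iff algebra_simps)
lemma smult_add1: "nc_smult (c + d) f = nc_smult c f + nc_smult d f"
  by (simp add: fun_eq_iff algebra_simps)
lemma smult_zero2[simp]: "nc_smult c 0 = 0" by (simp add: fun_eq_iff)
lemma smult_zero1[simp]: "nc_smult 0 f = 0" by (simp add: fun_eq_iff)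
lemma smult_one[simp]: "nc_smult 1 f = f" by (simp add: fun_eq_iff)
lemma smult_smult[simp]: "nc_smult c (nc_smult d f) = nc_smult (c * d) f" by (simp add: fun_eq_iff)
lemma smult_sum2: "nc_smult c (\<Sum>i\<in>I. f i) = (\<Sum>i\<in>I. nc_smult c (f i))"
  by (simp add: fun_eq_iff sum_fun_apply sum_distrib_left)
lemma smult_sum1: "nc_smult (\<Sum>i\<in>I. c i) f = (\<Sum>i\<in>I. nc_smult (c i) f)"
  by (simp add: fun_eq_iff sum_fun_apply sum_distrib_right)

lemma cat_Nil: "cat f g [] = f [] * g []" by (simp add: cat_def)

lemma cat_Cons: "cat f g (a # w) = f [] * g (a # w) + cat (\<lambda>v. f (a # v)) g w"
  unfolding cat_def length_Cons sum.atMost_Suc_shift by simp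

lemma cat_add1: "cat (f + g) h = cat f h + cat g h"
  by (simp add: cat_def fun_eq_iff algebra_simps sum.distrib)
lemma cat_add2: "cat h (f + g) = cat h f + cat h g"
  by (simp add: cat_def fun_eq_iff algebra_simps sum.distrib)
lemma cat_zero1[simp]: "cat 0 h = 0" by (simp add: cat_def fun_eq_iff)
lemma cat_zero2[simp]: "cat h 0 = 0" by (simp add: cat_def fun_eq_iff)
lemma cat_zero1'[simp]: "cat (\<lambda>_. 0) h = 0" by (simp add: cat_def fun_eq_iff)
lemma cat_zero2'[simp]: "cat h (\<lambda>_. 0) = 0" by (simp add: cat_def fun_eq_iff)
lemma cat_smult1: "cat (nc_smult c f) h = nc_smult c (cat f h)"
  by (simp add: cat_def fun_eq_iff algebra_simps sum_distrib_left)
lemma cat_smult2: "cat h (nc_smult c f) = nc_smult c (cat h f)"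
  by (simp add: cat_def fun_eq_iff algebra_simps sum_distrib_left)
lemma cat_sum1: "cat (\<Sum>i\<in>I. f i) h = (\<Sum>i\<in>I. cat (f i) h)"
proof (induction I rule: infinite_finite_induct)
  case (insert x F)
  then show ?case by (metis sum.insert cat_add1)
qed simp_all
lemma cat_sum2: "cat h (\<Sum>i\<in>I. f i) = (\<Sum>i\<in>I. cat h (f i))"
proof (induction I rule: infinite_finite_induct)
  case (insert x F)
  then show ?case by (metis sum.insert cat_add2)
qed simp_all

lemma cat_assoc: "cat f (cat g h) = cat (cat f g) h"
proof
  fix w show "cat f (cat g h) w = cat (cat f g) h w"
  proof (induction w arbitrary: f)
    case Nil then show ?case by (simp add: cat_Nil)
  next
    case (Cons a w)
    have e: "(\<lambda>v. cat f g (a # v)) = nc_smult (f []) (\<lambda>v. g (a # v)) + cat (\<lambda>v. f (a # v)) g"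
      by (simp add: fun_eq_iff cat_Cons)
    have "cat (cat f g) h (a#w) = cat f g [] * h (a#w) + cat (\<lambda>v. cat f g (a#v)) h w"
      by (rule cat_Cons)
    also have "\<dots> = f [] * g [] * h (a#w) + cat (nc_smult (f []) (\<lambda>v. g (a # v)) + cat (\<lambda>v. f (a # v)) g) h w"
      by (simp only: e cat_Nil)
    also have "\<dots> = f [] * g [] * h (a#w) + f [] * cat (\<lambda>v. g (a # v)) h w + cat (cat (\<lambda>v. f (a # v)) g) h w"
      by (simp add: cat_add1 cat_smult1)
    finally show ?case
      by (simp add: cat_Cons Cons cat_Nil algebra_simps)
  qed
qed

lemma wd_Cons_shift: "(\<lambda>v. wd (b # u) (a # v)) = (if a = b then wd u else 0)"
  by (auto simp: wd_def fun_eq_iff)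

lemma cat_wd_Nil[simp]: "cat (wd []) g = g"
proof
  fix w show "cat (wd []) g w = g w"
    by (cases w) (auto simp: cat_Nil cat_Cons wd_def fun_eq_iff cong: if_cong)
qed

lemma cat_wd_left: "cat (wd u) g w = (if take (length u) w = u then g (drop (length u) w) else 0)"
proof (induction u arbitrary: w)
  case Nil then show ?case by simp
next
  case (Cons b u)
  show ?case
  proof (cases w)
    case Nil then show ?thesis by (simp add: cat_Nil wd_def)
  next
    case (Cons a w')
    show ?thesis using Cons.IH
      by (simp add: \<open>w = a # w'\<close> cat_Cons wd_Cons_shift) (simp add: wd_def)
  qed
qed

lemma cat_wd_wd[simp]: "cat (wd u) (wd v) = wd (u @ v)"
proof
  fix w
  show "cat (wd u) (wd v) w = wd (u @ v) w"
  proof (cases "w = u @ v")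
    case True then show ?thesis by (simp only: cat_wd_left) (simp add: wd_def)
  next
    case False
    have "\<not> (take (length u) w = u \<and> drop (length u) w = v)"
      using False append_take_drop_id[of "length u" w] by metis
    then show ?thesis using False by (simp only: cat_wd_left) (auto simp add: wd_def)
  qed
qed

definition fin :: "nc \<Rightarrow> bool" where "fin f = finite (supp f)"

lemma supp_wd[simp]: "supp (wd u) = {u}" by (auto simp: supp_def wd_def)
lemma fin_wd[simp]: "fin (wd u)" by (simp add: fin_def)
lemma fin_zero[simp]: "fin 0" by (simp add: fin_def supp_def)
lemma fin_add[simp]: "fin f \<Longrightarrow> fin g \<Longrightarrow> fin (f + g)"
  unfolding fin_def by (rule finite_subset[of _ "supp f \<union> supp g"]) (auto simp: supp_def)
lemma fin_smult[simp]: "fin f \<Longrightarrow> fin (nc_smult c f)"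
  unfolding fin_def by (rule finite_subset[of _ "supp f"]) (auto simp: supp_def)
lemma fin_sum[simp]: "(\<And>i. i \<in> I \<Longrightarrow> fin (f i)) \<Longrightarrow> fin (\<Sum>i\<in>I. f i)"
  by (induction I rule: infinite_finite_induct) auto
lemma supp_cat_wd: "supp (cat (wd u) g) \<subseteq> (\<lambda>v. u @ v) ` supp g"
proof
  fix x assume "x \<in> supp (cat (wd u) g)"
  then have a: "take (length u) x = u" and b: "g (drop (length u) x) \<noteq> 0"
    by (auto simp: supp_def cat_wd_left split: if_splits)
  have "x = u @ drop (length u) x" using a append_take_drop_id[of "length u" x] by simp
  then show "x \<in> (\<lambda>v. u @ v) ` supp g" using b by (auto simp: supp_def)
qed

lemma fin_cat_wd[simp]: "fin g \<Longrightarrow> fin (cat (wd u) g)"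
  unfolding fin_def using supp_cat_wd finite_subset by blast

lemma expand_super: "finite F \<Longrightarrow> supp f \<subseteq> F \<Longrightarrow> f = (\<Sum>v\<in>F. nc_smult (f v) (wd v))"
proof
  fix x assume F: "finite F" "supp f \<subseteq> F"
  show "f x = (\<Sum>v\<in>F. nc_smult (f v) (wd v)) x"
  proof (cases "x \<in> F")
    case True
    have "(\<Sum>v\<in>F. nc_smult (f v) (wd v)) x = (\<Sum>v\<in>F. if v = x then f v else 0)"
      by (simp add: sum_fun_apply wd_def) (rule sum.cong, auto)
    then show ?thesis using F True by simp
  next
    case False
    then have "f x = 0" using F by (auto simp: supp_def)
    have "(\<Sum>v\<in>F. nc_smult (f v) (wd v)) x = (\<Sum>v\<in>F. if v = x then f v else 0)"
      by (simp add: sum_fun_apply wd_def) (rule sum.cong, auto)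
    then show ?thesis using F False \<open>f x = 0\<close> by simp
  qed
qed

lemma expand: "fin f \<Longrightarrow> f = (\<Sum>v\<in>supp f. nc_smult (f v) (wd v))"
  using expand_super fin_def by blast


lemma idx_aux_rep: "idx_aux c (replicate n Lx @ w) = idx_aux (c + n) w"
  by (induction n arbitrary: c) auto

lemma idx_z_app: "1 \<le> a \<Longrightarrow> idx (z a @ v) = a # idx v"
  by (simp add: idx_def z_def idx_aux_rep)

lemma z_app_zs: "zs (a # ks) = z a @ zs ks" by (simp add: zs_def)

lemma idx_zs: "\<forall>x\<in>set ks. 1 \<le> x \<Longrightarrow> idx (zs ks) = ks"
proof (induction ks)
  case Nil then show ?case by (simp add: zs_def idx_def)
next
  case (Cons a ks) then show ?case by (simp add: z_app_zs idx_z_app)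
qed

lemma zs_idx_aux: "w \<noteq> [] \<Longrightarrow> last w = Ly \<Longrightarrow> zs (idx_aux c w) = replicate c Lx @ w"
proof (induction w arbitrary: c)
  case Nil then show ?case by simp
next
  case (Cons a w)
  show ?case
  proof (cases a)
    case Lx
    then have "w \<noteq> []" using Cons.prems by auto
    then have "last w = Ly" using Cons.prems by auto
    then show ?thesis using Cons.IH[of "Suc c"] \<open>w \<noteq> []\<close> Lx by (simp add: replicate_app_Cons_same)
  next
    case Ly
    show ?thesis
    proof (cases "w = []")
      case True then show ?thesis using Ly by (simp add: zs_def z_def)
    next
      case False
      then have "last w = Ly" using Cons.prems by auto
      then show ?thesis using Cons.IH[of 0] False Ly by (simp add: zs_def z_def)
    qed
  qed
qed

lemma idx_Nil[simp]: "idx [] = []" by (simp add: idx_def)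
lemma zs_Nil[simp]: "zs [] = []" by (simp add: zs_def)

lemma zs_idx: "w = [] \<or> last w = Ly \<Longrightarrow> zs (idx w) = w"
proof (cases "w = []")
  case False
  assume "w = [] \<or> last w = Ly"
  then show ?thesis using zs_idx_aux[of w 0] False by (simp add: idx_def)
qed simp

lemma idx_aux_pos: "x \<in> set (idx_aux c w) \<Longrightarrow> 1 \<le> x"
  by (induction c w rule: idx_aux.induct) auto

lemma idx_pos: "\<forall>x\<in>set (idx w). 1 \<le> x"
  using idx_aux_pos by (auto simp: idx_def)

lemma z_last: "z a \<noteq> [] \<and> last (z a) = Ly" by (simp add: z_def)

abbreviation H :: "word \<Rightarrow> word \<Rightarrow> nc" where "H v w \<equiv> harm_idx (idx v) (idx w)"

lemma hprod_fun: "hprod f g = (\<Sum>v\<in>supp f. \<Sum>w\<in>supp g. nc_smult (f v * g w) (H v w))"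
  by (simp add: hprod_def fun_eq_iff sum_fun_apply)

lemma hprod_super:
  assumes "finite F" "supp f \<subseteq> F" "finite G" "supp g \<subseteq> G"
  shows "hprod f g = (\<Sum>v\<in>F. \<Sum>w\<in>G. nc_smult (f v * g w) (H v w))"
proof -
  have "hprod f g = (\<Sum>v\<in>supp f. \<Sum>w\<in>G. nc_smult (f v * g w) (H v w))"
    unfolding hprod_fun
    by (rule sum.cong[OF refl], rule sum.mono_neutral_left) (use assms in \<open>auto simp: supp_def\<close>)
  also have "\<dots> = (\<Sum>v\<in>F. \<Sum>w\<in>G. nc_smult (f v * g w) (H v w))"
    by (rule sum.mono_neutral_left) (use assms in \<open>auto simp: supp_def\<close>)
  finally show ?thesis .
qed

lemma hprod_super': "fin f \<Longrightarrow> fin g \<Longrightarrow> finite F \<Longrightarrow> supp f \<subseteq> F \<Longrightarrow> finite G \<Longrightarrow> supp g \<subseteq> G \<Longrightarrow>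
  hprod f g = (\<Sum>v\<in>F. \<Sum>w\<in>G. nc_smult (f v * g w) (H v w))"
  using hprod_super by blast

lemma supp_add: "supp (f + g) \<subseteq> supp f \<union> supp g" by (auto simp: supp_def)

lemma hprod_add1: assumes "fin f" "fin f'" "fin g" shows "hprod (f + f') g = hprod f g + hprod f' g"
proof -
  let ?F = "supp f \<union> supp f'"
  have fF: "finite ?F" using assms by (simp add: fin_def)
  have g: "finite (supp g)" using assms by (simp add: fin_def)
  have "hprod (f + f') g = (\<Sum>v\<in>?F. \<Sum>w\<in>supp g. nc_smult ((f + f') v * g w) (H v w))"
    by (rule hprod_super[OF fF _ g]) (use supp_add in auto)
  also have "\<dots> = (\<Sum>v\<in>?F. \<Sum>w\<in>supp g. nc_smult (f v * g w) (H v w))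
     + (\<Sum>v\<in>?F. \<Sum>w\<in>supp g. nc_smult (f' v * g w) (H v w))"
    by (simp add: algebra_simps smult_add1 sum.distrib)
  also have "\<dots> = hprod f g + hprod f' g"
    by (subst (1 2) hprod_super[OF fF _ g]) auto
  finally show ?thesis .
qed

lemma hprod_add2: assumes "fin f" "fin g" "fin g'" shows "hprod f (g + g') = hprod f g + hprod f g'"
proof -
  let ?G = "supp g \<union> supp g'"
  have gG: "finite ?G" using assms by (simp add: fin_def)
  have f: "finite (supp f)" using assms by (simp add: fin_def)
  have "hprod f (g + g') = (\<Sum>v\<in>supp f. \<Sum>w\<in>?G. nc_smult (f v * (g + g') w) (H v w))"
    by (rule hprod_super[OF f _ gG]) (use supp_add in auto)
  also have "\<dots> = (\<Sum>v\<in>supp f. \<Sum>w\<in>?G. nc_smult (f v * g w) (H v w))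
     + (\<Sum>v\<in>supp f. \<Sum>w\<in>?G. nc_smult (f v * g' w) (H v w))"
    by (simp add: algebra_simps smult_add1 sum.distrib)
  also have "\<dots> = hprod f g + hprod f g'"
    by (subst (1 2) hprod_super[OF f _ gG]) auto
  finally show ?thesis .
qed

lemma supp_smult: "supp (nc_smult c f) \<subseteq> supp f" by (auto simp: supp_def)

lemma hprod_smult1: assumes "fin f" "fin g" shows "hprod (nc_smult c f) g = nc_smult c (hprod f g)"
proof -
  have f: "finite (supp f)" "finite (supp g)" using assms by (auto simp: fin_def)
  have "hprod (nc_smult c f) g = (\<Sum>v\<in>supp f. \<Sum>w\<in>supp g. nc_smult (c * f v * g w) (H v w))"
    by (subst hprod_super[OF f(1) supp_smult f(2) order_refl]) (simp add: mult.assoc)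
  also have "\<dots> = nc_smult c (hprod f g)"
    by (simp add: hprod_fun smult_sum2 mult.assoc)
  finally show ?thesis .
qed

lemma hprod_smult2: assumes "fin f" "fin g" shows "hprod f (nc_smult c g) = nc_smult c (hprod f g)"
proof -
  have f: "finite (supp f)" "finite (supp g)" using assms by (auto simp: fin_def)
  have "hprod f (nc_smult c g) = (\<Sum>v\<in>supp f. \<Sum>w\<in>supp g. nc_smult (c * (f v * g w)) (H v w))"
    by (subst hprod_super[OF f(1) order_refl f(2) supp_smult]) (simp add: algebra_simps)
  also have "\<dots> = nc_smult c (hprod f g)"
    by (simp add: hprod_fun smult_sum2)
  finally show ?thesis .
qed

lemma hprod_zero1[simp]: "hprod 0 g = 0" by (simp add: hprod_def supp_def fun_eq_iff)
lemma hprod_zero2[simp]: "hprod f 0 = 0" by (simp add: hprod_def supp_def fun_eq_iff)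

lemma hprod_sum1: "finite I \<Longrightarrow> (\<And>i. i \<in> I \<Longrightarrow> fin (f i)) \<Longrightarrow> fin g \<Longrightarrow>
   hprod (\<Sum>i\<in>I. f i) g = (\<Sum>i\<in>I. hprod (f i) g)"
proof (induction I rule: finite_induct)
  case (insert x F)
  have "hprod (sum f (insert x F)) g = hprod (f x + sum f F) g" by (simp only: sum.insert[OF insert.hyps])
  also have "\<dots> = hprod (f x) g + hprod (sum f F) g"
    by (rule hprod_add1) (use insert in auto)
  also have "\<dots> = (\<Sum>i\<in>insert x F. hprod (f i) g)"
    using insert by (simp only: sum.insert[OF insert.hyps]) simp
  finally show ?case .
qed simp

lemma hprod_sum2: "finite I \<Longrightarrow> (\<And>i. i \<in> I \<Longrightarrow> fin (g i)) \<Longrightarrow> fin f \<Longrightarrow>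
   hprod f (\<Sum>i\<in>I. g i) = (\<Sum>i\<in>I. hprod f (g i))"
proof (induction I rule: finite_induct)
  case (insert x F)
  have "hprod f (sum g (insert x F)) = hprod f (g x + sum g F)" by (simp only: sum.insert[OF insert.hyps])
  also have "\<dots> = hprod f (g x) + hprod f (sum g F)"
    by (rule hprod_add2) (use insert in auto)
  also have "\<dots> = (\<Sum>i\<in>insert x F. hprod f (g i))"
    using insert by (simp only: sum.insert[OF insert.hyps]) simp
  finally show ?case .
qed simp

lemma wd_same[simp]: "wd u u = 1" by (simp add: wd_def)

lemma hprod_wd: "hprod (wd u) (wd v) = H u v"
  unfolding hprod_fun supp_wd by simp

definition h1 :: "nc \<Rightarrow> bool" where "h1 f = (\<forall>w\<in>supp f. w = [] \<or> last w = Ly)"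

lemma harm_idx_Nil2: "harm_idx k [] = wd (zs k)" by (cases k) auto

lemma hprod_one1: assumes "fin g" "h1 g" shows "hprod (wd []) g = g"
proof -
  have "hprod (wd []) g = (\<Sum>w\<in>supp g. nc_smult (g w) (wd w))"
    using assms unfolding hprod_fun supp_wd by (auto simp: h1_def zs_idx intro!: sum.cong)
  then show ?thesis using expand[OF assms(1)] by simp
qed

lemma hprod_one2: assumes "fin f" "h1 f" shows "hprod f (wd []) = f"
proof -
  have "hprod f (wd []) = (\<Sum>w\<in>supp f. nc_smult (f w) (wd w))"
    using assms unfolding hprod_fun supp_wd by (auto simp: h1_def zs_idx harm_idx_Nil2 intro!: sum.cong)
  then show ?thesis using expand[OF assms(1)] by simp
qed

lemma fin_harm: "fin (harm_idx k l)"
proof (induction k l rule: harm_idx.induct)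
  case (3 a k b l)
  then show ?case unfolding harm_idx.simps nc_add_eq zw_def
    by (intro fin_add fin_cat_wd)
qed simp_all

lemma fin_hprod[simp]: "fin (hprod f g)"
  by (simp add: hprod_fun fin_harm)

lemma h1_wd: "w = [] \<or> last w = Ly \<Longrightarrow> h1 (wd w)" by (simp add: h1_def)
lemma h1_zero[simp]: "h1 0" by (simp add: h1_def supp_def)
lemma h1_add[simp]: "h1 f \<Longrightarrow> h1 g \<Longrightarrow> h1 (f + g)" unfolding h1_def using supp_add[of f g] by blast
lemma h1_smult[simp]: "h1 f \<Longrightarrow> h1 (nc_smult c f)" using supp_smult by (auto simp: h1_def)
lemma h1_sum[simp]: "(\<And>i. i \<in> I \<Longrightarrow> h1 (f i)) \<Longrightarrow> h1 (\<Sum>i\<in>I. f i)"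
  by (induction I rule: infinite_finite_induct) auto
lemma h1_cat_wd: assumes "u \<noteq> []" "last u = Ly" "h1 g" shows "h1 (cat (wd u) g)"
  unfolding h1_def
proof
  fix w assume "w \<in> supp (cat (wd u) g)"
  then obtain v where v: "v \<in> supp g" "w = u @ v" using supp_cat_wd[of u g] by blast
  then show "w = [] \<or> last w = Ly" using assms unfolding h1_def by (cases "v = []") auto
qed
lemma h1_cat_zw[simp]: "h1 g \<Longrightarrow> h1 (cat (zw a) g)"
  by (simp add: zw_def h1_cat_wd z_last)

lemma cat_expand: "fin f \<Longrightarrow> cat (wd u) f = (\<Sum>v\<in>supp f. nc_smult (f v) (wd (u @ v)))"
  by (subst expand, assumption) (simp add: cat_sum2 cat_smult2)

lemma hprod_bil:
  assumes "finite V" "finite W"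
  shows "hprod (\<Sum>v\<in>V. nc_smult (f v) (wd (\<alpha> v))) (\<Sum>w\<in>W. nc_smult (g w) (wd (\<beta> w)))
     = (\<Sum>v\<in>V. \<Sum>w\<in>W. nc_smult (f v * g w) (hprod (wd (\<alpha> v)) (wd (\<beta> w))))"
  using assms
  by (simp add: hprod_sum1 hprod_sum2 hprod_smult1 hprod_smult2 smult_sum2 mult.commute)
    (rule sum.swap)

lemma letter_rule:
  assumes a: "1 \<le> a" and b: "1 \<le> b" and f: "fin f" and g: "fin g"
  shows "hprod (cat (zw a) f) (cat (zw b) g) =
    cat (zw a) (hprod f (cat (zw b) g)) + cat (zw b) (hprod (cat (zw a) f) g)
    + cat (zw (a + b)) (hprod f g)"
proof -
  have fs: "finite (supp f)" "finite (supp g)" using f g by (auto simp: fin_def)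
  note ef = expand[OF f] and eg = expand[OF g]
  note cf = cat_expand[OF f, of "z a"] and cg = cat_expand[OF g, of "z b"]
  have L: "hprod (cat (zw a) f) (cat (zw b) g) = (\<Sum>v\<in>supp f. \<Sum>w\<in>supp g.
      nc_smult (f v * g w) (hprod (wd (z a @ v)) (wd (z b @ w))))"
    unfolding zw_def cf cg by (rule hprod_bil[OF fs])
  have R1: "hprod f (cat (zw b) g) = (\<Sum>v\<in>supp f. \<Sum>w\<in>supp g.
      nc_smult (f v * g w) (hprod (wd v) (wd (z b @ w))))"
    unfolding zw_def cg by (subst ef, rule hprod_bil[OF fs])
  have R2: "hprod (cat (zw a) f) g = (\<Sum>v\<in>supp f. \<Sum>w\<in>supp g.
      nc_smult (f v * g w) (hprod (wd (z a @ v)) (wd w)))"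
    unfolding zw_def cf by (subst (1) eg, rule hprod_bil[OF fs])
  have R3: "hprod f g = (\<Sum>v\<in>supp f. \<Sum>w\<in>supp g.
      nc_smult (f v * g w) (hprod (wd v) (wd w)))"
    by (subst (1) ef, subst (1) eg, rule hprod_bil[OF fs])
  have key: "hprod (wd (z a @ v)) (wd (z b @ w)) =
     cat (zw a) (hprod (wd v) (wd (z b @ w))) + cat (zw b) (hprod (wd (z a @ v)) (wd w))
     + cat (zw (a + b)) (hprod (wd v) (wd w))" for v w
    using a b by (simp add: hprod_wd idx_z_app nc_add_eq)
  show ?thesis
    unfolding L R1 R2 R3 key
    by (simp add: cat_sum2 cat_smult2 smult_add2 sum.distrib)
qed

lemma letter_rule_s:
  assumes a: "1 \<le> a \<or> c = 0" and b: "1 \<le> b \<or> d = 0" and f: "fin f" and g: "fin g"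
  shows "hprod (cat (nc_smult c (zw a)) f) (cat (nc_smult d (zw b)) g) =
    cat (nc_smult c (zw a)) (hprod f (cat (nc_smult d (zw b)) g))
    + cat (nc_smult d (zw b)) (hprod (cat (nc_smult c (zw a)) f) g)
    + cat (nc_smult (c * d) (zw (a + b))) (hprod f g)"
proof (cases "c = 0 \<or> d = 0")
  case True
  then show ?thesis using f g
    by (auto simp: cat_smult1 hprod_smult1 hprod_smult2 zw_def)
next
  case False
  then have "1 \<le> a" "1 \<le> b" using a b by auto
  then show ?thesis using letter_rule[of a b f g] f g
    by (simp add: cat_smult1 cat_smult2 hprod_smult1 hprod_smult2 zw_def smult_add2 mult.commute)
qed


lemma triT: "(\<Sum>j\<le>(n::nat). \<Sum>i\<le>j. g i j) = (\<Sum>i\<le>n. \<Sum>l\<le>n-i. g i (i+l))"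
proof (induction n)
  case 0 then show ?case by simp
next
  case (Suc n)
  have a: "(\<Sum>i\<le>n. \<Sum>l\<le>Suc n - i. g i (i+l)) = (\<Sum>i\<le>n. (\<Sum>l\<le>n-i. g i (i+l)) + g i (Suc n))"
    by (rule sum.cong) (auto simp: Suc_diff_le)
  have "(\<Sum>i\<le>Suc n. \<Sum>l\<le>Suc n-i. g i (i+l)) = (\<Sum>i\<le>n. \<Sum>l\<le>Suc n-i. g i (i+l)) + g (Suc n) (Suc n)"
    by simp
  also have "\<dots> = (\<Sum>i\<le>n. \<Sum>l\<le>n-i. g i (i+l)) + (\<Sum>i\<le>n. g i (Suc n)) + g (Suc n) (Suc n)"
    unfolding a sum.distrib by simp
  finally show ?case using Suc by (simp add: add.assoc)
qed

lemma swapT: "(\<Sum>j\<le>(n::nat). \<Sum>r\<le>n-j. F j r) = (\<Sum>r\<le>n. \<Sum>j\<le>n-r. F j r)"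
proof -
  have "(\<Sum>j\<le>n. \<Sum>r\<le>n-j. F j r) = (\<Sum>j\<in>{..n}. sum (F j) {r\<in>{..n}. j + r \<le> n})"
    by (rule sum.cong) (auto intro!: sum.cong)
  also have "\<dots> = (\<Sum>r\<in>{..n}. \<Sum>j | j \<in> {..n} \<and> j + r \<le> n. F j r)"
    by (rule sum.swap_restrict) auto
  also have "\<dots> = (\<Sum>r\<le>n. \<Sum>j\<le>n-r. F j r)"
    by (rule sum.cong) (auto intro!: sum.cong)
  finally show ?thesis .
qed

definition dl :: "nat \<Rightarrow> nc" where "dl n = (if n = 0 then wd [] else 0)"

definition lser :: "nat \<Rightarrow> (nat \<Rightarrow> rat poly) \<Rightarrow> ser" where
  "lser k c = (\<lambda>i. nc_smult (c i) (zw (i * k)))"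

lemma ser_cat_eq: "ser_cat A B n = (\<Sum>i\<le>n. cat (A i) (B (n - i)))"
  by (simp add: ser_cat_def fun_eq_iff sum_fun_apply)

lemma geom_eq: "geom A n = (\<Sum>m\<le>n. ser_pow A m n)"
  by (simp add: geom_def fun_eq_iff sum_fun_apply)

lemma ser_pow_gt: "A 0 = 0 \<Longrightarrow> n < m \<Longrightarrow> ser_pow A m n = 0"
proof (induction m arbitrary: n)
  case 0 then show ?case by simp
next
  case (Suc m)
  have "ser_pow A (Suc m) n = (\<Sum>i\<le>n. cat (A i) (ser_pow A m (n - i)))"
    by (simp add: ser_cat_eq)
  also have "\<dots> = 0"
  proof (rule sum.neutral, rule ballI)
    fix i assume i: "i \<in> {..n}"
    show "cat (A i) (ser_pow A m (n - i)) = 0"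
    proof (cases "i = 0")
      case True then show ?thesis using Suc by simp
    next
      case False
      then have "n - i < m" using Suc i by auto
      then show ?thesis using Suc by simp
    qed
  qed
  finally show ?case .
qed

lemma geom_rec:
  assumes A0: "A 0 = 0"
  shows "geom A n = dl n + (\<Sum>i\<le>n. cat (A i) (geom A (n - i)))"
proof (cases n)
  case 0 then show ?thesis by (simp add: geom_eq dl_def ser_one_def A0)
next
  case (Suc n')
  have "geom A n = ser_pow A 0 n + (\<Sum>m\<le>n'. ser_pow A (Suc m) n)"
    unfolding geom_eq Suc sum.atMost_Suc_shift by simp
  also have "ser_pow A 0 n = 0" using Suc by (simp add: ser_one_def nc_zero_eq)
  also have "(\<Sum>m\<le>n'. ser_pow A (Suc m) n) = (\<Sum>m\<le>n'. \<Sum>i\<le>n. cat (A i) (ser_pow A m (n - i)))"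
    by (simp add: ser_cat_eq)
  also have "\<dots> = (\<Sum>i\<le>n. cat (A i) (\<Sum>m\<le>n'. ser_pow A m (n - i)))"
    by (subst sum.swap) (simp add: cat_sum2)
  also have "\<dots> = (\<Sum>i\<le>n. cat (A i) (geom A (n - i)))"
  proof (rule sum.cong[OF refl])
    fix i assume "i \<in> {..n}"
    show "cat (A i) (\<Sum>m\<le>n'. ser_pow A m (n - i)) = cat (A i) (geom A (n - i))"
    proof (cases "i = 0")
      case True then show ?thesis using A0 by simp
    next
      case False
      have "(\<Sum>m\<le>n'. ser_pow A m (n - i)) = (\<Sum>m\<le>n - i. ser_pow A m (n - i))"
        by (rule sum.mono_neutral_right) (use False Suc ser_pow_gt[where A=A, OF A0] in auto)
      then show ?thesis by (simp add: geom_eq)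
    qed
  qed
  finally have eq: "geom A n = 0 + (\<Sum>i\<le>n. cat (A i) (geom A (n - i)))" .
  have "dl n = 0" using Suc by (simp add: dl_def)
  then show ?thesis using eq by (simp only:)
qed

lemma geom_unique:
  assumes A0: "A 0 = 0" and F: "\<And>n. F n = dl n + (\<Sum>i\<le>n. cat (A i) (F (n - i)))"
  shows "F n = geom A n"
proof (induction n rule: less_induct)
  case (less n)
  have "(\<Sum>i\<le>n. cat (A i) (F (n - i))) = (\<Sum>i\<le>n. cat (A i) (geom A (n - i)))"
  proof (rule sum.cong[OF refl])
    fix i assume i: "i \<in> {..n}"
    show "cat (A i) (F (n - i)) = cat (A i) (geom A (n - i))"
    proof (cases "i = 0")
      case True then show ?thesis using A0 by simp
    next
      case False then have "n - i < n" using i by auto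
      then show ?thesis using less by simp
    qed
  qed
  then show ?case using F[of n] geom_rec[where A=A, OF A0, of n] by simp
qed

lemma fin_cat_lser[simp]: "fin g \<Longrightarrow> fin (cat (lser k c i) g)"
  by (simp add: lser_def cat_smult1 zw_def)
lemma h1_cat_lser[simp]: "h1 g \<Longrightarrow> h1 (cat (lser k c i) g)"
  by (simp add: lser_def cat_smult1)

lemma fin_h1_pow: "fin (ser_pow (lser k c) m n) \<and> h1 (ser_pow (lser k c) m n)"
proof (induction m arbitrary: n)
  case 0 then show ?case by (simp add: ser_one_def nc_zero_eq h1_wd)
next
  case (Suc m)
  then show ?case
    by (simp add: ser_cat_eq)
qed

lemma fin_geom[simp]: "fin (geom (lser k c) n)"
  using fin_h1_pow by (simp add: geom_eq)
lemma h1_geom[simp]: "h1 (geom (lser k c) n)"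
  using fin_h1_pow by (simp add: geom_eq)

lemma fin_dl[simp]: "fin (dl n)" by (simp add: dl_def)
lemma h1_dl[simp]: "h1 (dl n)" by (simp add: dl_def h1_wd)

lemma hprod_dl1: "fin f \<Longrightarrow> h1 f \<Longrightarrow> hprod (dl j) f = (if j = 0 then f else 0)"
  by (simp add: dl_def hprod_one1)
lemma hprod_dl2: "fin f \<Longrightarrow> h1 f \<Longrightarrow> hprod f (dl j) = (if j = 0 then f else 0)"
  by (simp add: dl_def hprod_one2)


lemma main_series:
  fixes c d :: "nat \<Rightarrow> rat poly"
  assumes c0: "c 0 = 0" and d0: "d 0 = 0" and k: "1 \<le> k"
  shows "ser_harm (geom (lser k c)) (geom (lser k d)) n
     = geom (lser k (\<lambda>s. c s + d s + (\<Sum>i\<le>s. c i * d (s - i)))) n"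
proof -
  define X where "X = lser k c"
  define Y where "Y = lser k d"
  define G where "G = geom X"
  define B where "B = geom Y"
  define Gp where "Gp j = (\<Sum>i\<le>j. cat (X i) (G (j - i)))" for j
  define Bp where "Bp m = (\<Sum>r\<le>m. cat (Y r) (B (m - r)))" for m
  define C where "C n = (\<Sum>j\<le>n. hprod (G j) (B (n - j)))" for n
  define XY where "XY i r = nc_smult (c i * d r) (zw ((i + r) * k))" for i r
  define W where "W s = (\<Sum>i\<le>s. XY i (s - i))" for s
  define e where "e s = c s + d s + (\<Sum>i\<le>s. c i * d (s - i))" for s
  have X0: "X 0 = 0" by (simp add: X_def lser_def c0)
  have Y0: "Y 0 = 0" by (simp add: Y_def lser_def d0)
  have fG[simp]: "fin (G j)" "h1 (G j)" for j by (simp_all add: G_def X_def)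
  have fB[simp]: "fin (B j)" "h1 (B j)" for j by (simp_all add: B_def Y_def)
  have fX[simp]: "fin f \<Longrightarrow> fin (cat (X i) f)" "h1 f \<Longrightarrow> h1 (cat (X i) f)" for f i
    by (simp_all add: X_def)
  have fY[simp]: "fin f \<Longrightarrow> fin (cat (Y i) f)" "h1 f \<Longrightarrow> h1 (cat (Y i) f)" for f i
    by (simp_all add: Y_def)
  have fGp[simp]: "fin (Gp j)" "h1 (Gp j)" for j by (simp_all add: Gp_def)
  have fBp[simp]: "fin (Bp j)" "h1 (Bp j)" for j by (simp_all add: Bp_def)
  have Grec: "G j = dl j + Gp j" for j
    unfolding G_def Gp_def by (rule geom_rec) (rule X0)
  have Brec: "B j = dl j + Bp j" for j
    unfolding B_def Bp_def by (rule geom_rec) (rule Y0)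
  have rule: "hprod (cat (X i) f) (cat (Y r) g) =
    cat (X i) (hprod f (cat (Y r) g)) + cat (Y r) (hprod (cat (X i) f) g) + cat (XY i r) (hprod f g)"
    if "fin f" "fin g" for i r f g
  proof -
    have a: "1 \<le> i * k \<or> c i = 0" using k c0 by (cases i) auto
    have b: "1 \<le> r * k \<or> d r = 0" using k d0 by (cases r) auto
    show ?thesis
      unfolding X_def Y_def XY_def lser_def
      using letter_rule_s[OF a b that] by (simp add: add_mult_distrib)
  qed
  have step3: "hprod (Gp j) (Bp m) =
      (\<Sum>i\<le>j. cat (X i) (hprod (G (j - i)) (Bp m)))
    + (\<Sum>r\<le>m. cat (Y r) (hprod (Gp j) (B (m - r))))
    + (\<Sum>i\<le>j. \<Sum>r\<le>m. cat (XY i r) (hprod (G (j - i)) (B (m - r))))" for j m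
  proof -
    have "hprod (Gp j) (Bp m) = (\<Sum>i\<le>j. \<Sum>r\<le>m. hprod (cat (X i) (G (j - i))) (cat (Y r) (B (m - r))))"
      unfolding Gp_def Bp_def by (simp add: hprod_sum1 hprod_sum2, rule sum.swap)
    also have "\<dots> = (\<Sum>i\<le>j. \<Sum>r\<le>m. cat (X i) (hprod (G (j - i)) (cat (Y r) (B (m - r)))))
       + (\<Sum>i\<le>j. \<Sum>r\<le>m. cat (Y r) (hprod (cat (X i) (G (j - i))) (B (m - r))))
       + (\<Sum>i\<le>j. \<Sum>r\<le>m. cat (XY i r) (hprod (G (j - i)) (B (m - r))))"
      by (simp add: rule sum.distrib)
    also have "(\<Sum>i\<le>j. \<Sum>r\<le>m. cat (X i) (hprod (G (j - i)) (cat (Y r) (B (m - r)))))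
       = (\<Sum>i\<le>j. cat (X i) (hprod (G (j - i)) (Bp m)))"
      unfolding Bp_def by (simp add: hprod_sum2 cat_sum2)
    also have "(\<Sum>i\<le>j. \<Sum>r\<le>m. cat (Y r) (hprod (cat (X i) (G (j - i))) (B (m - r))))
       = (\<Sum>r\<le>m. cat (Y r) (hprod (Gp j) (B (m - r))))"
      unfolding Gp_def by (subst sum.swap) (simp add: hprod_sum1 cat_sum2)
    finally show ?thesis .
  qed
  have step2: "hprod (G j) (B m) = (if j = 0 then B m else 0) + (if m = 0 then Gp j else 0)
      + hprod (Gp j) (Bp m)" for j m
  proof -
    have "hprod (G j) (B m) = hprod (dl j) (B m) + hprod (Gp j) (B m)"
      by (subst Grec) (simp add: hprod_add1)
    also have "hprod (Gp j) (B m) = hprod (Gp j) (dl m) + hprod (Gp j) (Bp m)"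
      by (subst Brec) (simp add: hprod_add2)
    finally have "hprod (G j) (B m) = hprod (dl j) (B m) + (hprod (Gp j) (dl m) + hprod (Gp j) (Bp m))" .
    then show ?thesis by (simp only: hprod_dl1[OF fB(1) fB(2)] hprod_dl2[OF fGp(1) fGp(2)] add.assoc)
  qed
  have CG: "G N + (\<Sum>l\<le>N. hprod (G l) (Bp (N - l))) = C N" for N
  proof -
    have "C N = (\<Sum>l\<le>N. hprod (G l) (dl (N - l))) + (\<Sum>l\<le>N. hprod (G l) (Bp (N - l)))"
      unfolding C_def by (subst Brec) (simp add: hprod_add2 sum.distrib)
    moreover have "(\<Sum>l\<le>N. hprod (G l) (dl (N - l))) = G N"
    proof -
      have "(\<Sum>l\<le>N. hprod (G l) (dl (N - l))) = (\<Sum>l\<le>N. if l = N then G l else 0)"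
        by (rule sum.cong) (auto simp: hprod_dl2)
      then show ?thesis by simp
    qed
    ultimately show ?thesis by (simp only:)
  qed
  have CB: "B N + (\<Sum>j\<le>N. hprod (Gp j) (B (N - j))) = C N" for N
  proof -
    have "C N = (\<Sum>j\<le>N. hprod (dl j) (B (N - j))) + (\<Sum>j\<le>N. hprod (Gp j) (B (N - j)))"
      unfolding C_def by (subst Grec) (simp add: hprod_add1 sum.distrib)
    moreover have "(\<Sum>j\<le>N. hprod (dl j) (B (N - j))) = B N"
    proof -
      have "(\<Sum>j\<le>N. hprod (dl j) (B (N - j))) = (\<Sum>j\<le>N. if j = 0 then B (N - j) else 0)"
        by (rule sum.cong) (auto simp: hprod_dl1)
      then show ?thesis by simp
    qed
    ultimately show ?thesis by (simp only:)
  qed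
  have Zeq: "X s + Y s + W s = lser k e s" for s
  proof -
    have "W s = (\<Sum>i\<le>s. nc_smult (c i * d (s - i)) (zw (s * k)))"
      unfolding W_def XY_def by (rule sum.cong) auto
    then show ?thesis
      by (simp add: X_def Y_def lser_def e_def smult_add1 smult_sum1)
  qed
  have Crec: "C N = dl N + (\<Sum>s\<le>N. cat (lser k e s) (C (N - s)))" for N
  proof -
  define T1 where "T1 = (\<Sum>j\<le>N. \<Sum>i\<le>j. cat (X i) (hprod (G (j - i)) (Bp (N - j))))"
  define T2 where "T2 = (\<Sum>j\<le>N. \<Sum>r\<le>N - j. cat (Y r) (hprod (Gp j) (B (N - j - r))))"
  define T3 where "T3 = (\<Sum>j\<le>N. \<Sum>i\<le>j. \<Sum>r\<le>N - j. cat (XY i r) (hprod (G (j - i)) (B (N - j - r))))"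
  have Csplit: "C N = B N + Gp N + T1 + T2 + T3"
  proof -
    have "C N = (\<Sum>j\<le>N. ((if j = 0 then B (N - j) else 0) + (if N - j = 0 then Gp j else 0))
       + hprod (Gp j) (Bp (N - j)))"
      unfolding C_def by (rule sum.cong[OF refl]) (rule step2)
    also have "\<dots> = (\<Sum>j\<le>N. ((if j = 0 then B (N - j) else 0) + (if N - j = 0 then Gp j else 0))
       + ((\<Sum>i\<le>j. cat (X i) (hprod (G (j - i)) (Bp (N - j))))
    + (\<Sum>r\<le>N - j. cat (Y r) (hprod (Gp j) (B (N - j - r))))
    + (\<Sum>i\<le>j. \<Sum>r\<le>N - j. cat (XY i r) (hprod (G (j - i)) (B (N - j - r))))))"
      by (rule sum.cong[OF refl]) (rule arg_cong[OF step3])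
    also have "\<dots> = (\<Sum>j\<le>N. if j = 0 then B (N - j) else 0) + (\<Sum>j\<le>N. if N - j = 0 then Gp j else 0)
       + (T1 + T2 + T3)"
      unfolding T1_def T2_def T3_def by (simp only: sum.distrib)
    also have "(\<Sum>j\<le>N. if N - j = 0 then Gp j else 0) = (\<Sum>j\<le>N. if j = N then Gp j else 0)"
      by (rule sum.cong) auto
    also have "(\<Sum>j\<le>N. if j = 0 then B (N - j) else 0) = B N" by simp
    also have "(\<Sum>j\<le>N. if j = N then Gp j else 0) = Gp N" by simp
    finally show ?thesis by (simp only: add.assoc)
  qed
  have Xpart: "Gp N + T1 = (\<Sum>i\<le>N. cat (X i) (C (N - i)))"
  proof -
    have "T1 = (\<Sum>i\<le>N. \<Sum>l\<le>N - i. cat (X i) (hprod (G l) (Bp (N - i - l))))"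
      unfolding T1_def by (subst triT) (simp add: diff_diff_add)
    also have "\<dots> = (\<Sum>i\<le>N. cat (X i) (\<Sum>l\<le>N - i. hprod (G l) (Bp (N - i - l))))"
      by (simp add: cat_sum2)
    finally have "Gp N + T1 = (\<Sum>i\<le>N. cat (X i) (G (N - i) + (\<Sum>l\<le>N - i. hprod (G l) (Bp (N - i - l)))))"
      unfolding Gp_def by (simp add: cat_add2 sum.distrib)
    also have "\<dots> = (\<Sum>i\<le>N. cat (X i) (C (N - i)))"
      by (simp only: CG)
    finally show ?thesis .
  qed
  have Ypart: "Bp N + T2 = (\<Sum>r\<le>N. cat (Y r) (C (N - r)))"
  proof -
    have "T2 = (\<Sum>r\<le>N. \<Sum>j\<le>N - r. cat (Y r) (hprod (Gp j) (B (N - r - j))))"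
      unfolding T2_def by (subst swapT) (simp add: diff_diff_add add.commute)
    also have "\<dots> = (\<Sum>r\<le>N. cat (Y r) (\<Sum>j\<le>N - r. hprod (Gp j) (B (N - r - j))))"
      by (simp add: cat_sum2)
    finally have "Bp N + T2 = (\<Sum>r\<le>N. cat (Y r) (B (N - r) + (\<Sum>j\<le>N - r. hprod (Gp j) (B (N - r - j)))))"
      unfolding Bp_def by (simp add: cat_add2 sum.distrib)
    also have "\<dots> = (\<Sum>r\<le>N. cat (Y r) (C (N - r)))"
      by (simp only: CB)
    finally show ?thesis .
  qed
  have XYpart: "T3 = (\<Sum>s\<le>N. cat (W s) (C (N - s)))"
  proof -
    have "T3 = (\<Sum>i\<le>N. \<Sum>l\<le>N - i. \<Sum>r\<le>N - i - l. cat (XY i r) (hprod (G l) (B (N - i - l - r))))"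
      unfolding T3_def by (subst triT) (simp add: diff_diff_add)
    also have "\<dots> = (\<Sum>i\<le>N. \<Sum>r\<le>N - i. \<Sum>l\<le>N - i - r. cat (XY i r) (hprod (G l) (B (N - i - r - l))))"
      by (rule sum.cong[OF refl], subst swapT) (simp add: diff_diff_add add_ac)
    also have "\<dots> = (\<Sum>i\<le>N. \<Sum>r\<le>N - i. cat (XY i r) (C (N - i - r)))"
      unfolding C_def by (simp add: cat_sum2)
    also have "\<dots> = (\<Sum>s\<le>N. \<Sum>i\<le>s. cat (XY i (s - i)) (C (N - s)))"
      by (subst triT) (simp add: diff_diff_add)
    also have "\<dots> = (\<Sum>s\<le>N. cat (W s) (C (N - s)))"
      unfolding W_def by (simp add: cat_sum1)
    finally show ?thesis .
  qed
    have "C N = dl N + ((Gp N + T1) + (Bp N + T2) + T3)"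
      unfolding Csplit Brec[of N] by (simp only: add_ac)
    also have "\<dots> = dl N + ((\<Sum>s\<le>N. cat (X s) (C (N - s))) + (\<Sum>s\<le>N. cat (Y s) (C (N - s)))
        + (\<Sum>s\<le>N. cat (W s) (C (N - s))))"
      by (simp only: Xpart Ypart XYpart)
    also have "\<dots> = dl N + (\<Sum>s\<le>N. cat (X s + Y s + W s) (C (N - s)))"
      by (simp add: cat_add1 sum.distrib)
    finally show ?thesis by (simp only: Zeq)
  qed
  have "C n = geom (lser k e) n"
    by (rule geom_unique[where F=C]) (simp add: lser_def e_def c0 d0, rule Crec)
  moreover have "ser_harm (geom (lser k c)) (geom (lser k d)) n = C n"
    by (simp add: ser_harm_def C_def G_def B_def X_def Y_def fun_eq_iff sum_fun_apply)
  moreover have "e = (\<lambda>s. c s + d s + (\<Sum>i\<le>s. c i * d (s - i)))" by (rule ext) (simp add: e_def)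
  ultimately show ?thesis by simp
qed


lemma S_map_wd: "S_map s (wd w) = S_word s w"
  by (simp add: S_map_def lin_def fun_eq_iff)

lemma cat_wd_Nil2[simp]: "cat f (wd []) = f"
proof
  fix w show "cat f (wd []) w = f w"
  proof (induction w arbitrary: f)
    case Nil then show ?case by (simp add: cat_Nil)
  next
    case (Cons a w) then show ?case by (simp add: cat_Cons wd_def)
  qed
qed

lemma sigma_word_append: "sigma_word s (u @ v) = cat (sigma_word s u) (sigma_word s v)"
  by (induction u) (simp_all add: cat_assoc)

lemma sigma_word_rep: "sigma_word s (replicate n Lx) = wd (replicate n Lx)"
  by (induction n) simp_all

lemma S_word_append: "w \<noteq> [] \<Longrightarrow> S_word s (u @ w) = cat (sigma_word s u) (S_word s w)"
  by (simp add: S_word_def butlast_append sigma_word_append cat_assoc)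

lemma rep_z: "1 \<le> j \<Longrightarrow> replicate k Lx @ z j = z (k + j)"
  by (simp add: z_def replicate_add[symmetric])

lemma sigma_z: "1 \<le> k \<Longrightarrow> sigma_word s (z k) = nc_smult s (wd (replicate k Lx)) + zw k"
proof -
  assume k: "1 \<le> k"
  have "sigma_word s (z k) = cat (wd (replicate (k - 1) Lx)) (sigma_word s [Ly])"
    by (simp add: z_def sigma_word_append sigma_word_rep)
  also have "sigma_word s [Ly] = nc_smult s (wd [Lx]) + wd [Ly]"
    by (simp add: nc_add_eq)
  also have "cat (wd (replicate (k - 1) Lx)) (nc_smult s (wd [Lx]) + wd [Ly])
      = nc_smult s (wd (replicate (k - 1) Lx @ [Lx])) + wd (z k)"
    by (simp add: cat_add2 cat_smult2 z_def)
  also have "replicate (k - 1) Lx @ [Lx] = replicate k Lx"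
    using k by (metis Suc_diff_1 less_le_trans zero_less_one replicate_Suc replicate_append_same)
  finally show ?thesis by (simp only: zw_def)
qed

definition zkn :: "nat \<Rightarrow> nat \<Rightarrow> word" where "zkn k n = concat (replicate n (z k))"

lemma zkn_Suc: "zkn k (Suc n) = z k @ zkn k n" by (simp add: zkn_def)

lemma S_word_zkn0: "S_word s (zkn k 0) = wd []" by (simp add: zkn_def S_word_def)
lemma S_word_zkn1: "S_word s (zkn k (Suc 0)) = zw k"
  by (simp add: zkn_def S_word_def z_def sigma_word_rep zw_def)
lemma S_word_zknSS: "1 \<le> k \<Longrightarrow> S_word s (zkn k (Suc (Suc m))) =
   cat (zw k) (S_word s (zkn k (Suc m))) + nc_smult s (cat (wd (replicate k Lx)) (S_word s (zkn k (Suc m))))"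
proof -
  assume k: "1 \<le> k"
  have ne: "zkn k (Suc m) \<noteq> []" by (simp add: zkn_Suc z_def)
  show ?thesis
    unfolding zkn_Suc[of k "Suc m"] S_word_append[OF ne] sigma_z[OF k]
    by (simp add: cat_add1 cat_smult1 add.commute zkn_Suc)
qed

definition Ys :: "nat \<Rightarrow> rat poly \<Rightarrow> ser" where
  "Ys k s = lser k (\<lambda>r. if 1 \<le> r then s ^ (r - 1) else 0)"

lemma Ys0: "Ys k s 0 = 0" by (simp add: Ys_def lser_def)

lemma Q_Suc: "geom (Ys k s) (Suc N) = (\<Sum>i\<le>N. nc_smult (s ^ i) (cat (zw (Suc i * k)) (geom (Ys k s) (N - i))))"
proof -
  have "geom (Ys k s) (Suc N) = dl (Suc N) + (\<Sum>i\<le>Suc N. cat (Ys k s i) (geom (Ys k s) (Suc N - i)))"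
    by (rule geom_rec) (rule Ys0)
  also have "\<dots> = (\<Sum>i\<le>N. cat (Ys k s (Suc i)) (geom (Ys k s) (N - i)))"
    unfolding sum.atMost_Suc_shift by (simp add: dl_def Ys0)
  also have "\<dots> = (\<Sum>i\<le>N. nc_smult (s ^ i) (cat (zw (Suc i * k)) (geom (Ys k s) (N - i))))"
    by (simp add: Ys_def lser_def cat_smult1)
  finally show ?thesis .
qed

lemma Q0: "geom (Ys k s) 0 = wd []"
  by (simp add: geom_eq ser_one_def)

lemma Q1: "geom (Ys k s) (Suc 0) = zw k"
  using Q_Suc[of k s 0] by (simp add: Q0)

lemma QSS: assumes k: "1 \<le> k"
  shows "geom (Ys k s) (Suc (Suc m)) = cat (zw k) (geom (Ys k s) (Suc m))
    + nc_smult s (cat (wd (replicate k Lx)) (geom (Ys k s) (Suc m)))"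
proof -
  let ?Q = "geom (Ys k s)"
  have z2: "cat (wd (replicate k Lx)) (cat (zw (Suc i * k)) f) = cat (zw (Suc (Suc i) * k)) f" for i f
  proof -
    have "1 \<le> Suc i * k" using k by simp
    then have "replicate k Lx @ z (Suc i * k) = z (Suc (Suc i) * k)" by (simp add: rep_z)
    then show ?thesis by (simp add: cat_assoc zw_def)
  qed
  have s1: "?Q (Suc (Suc m)) = (\<Sum>i\<le>Suc m. nc_smult (s ^ i) (cat (zw (Suc i * k)) (?Q (Suc m - i))))"
    by (rule Q_Suc)
  have s2: "(\<Sum>i\<le>Suc m. nc_smult (s ^ i) (cat (zw (Suc i * k)) (?Q (Suc m - i))))
     = nc_smult (s ^ 0) (cat (zw (Suc 0 * k)) (?Q (Suc m - 0)))
       + (\<Sum>i\<le>m. nc_smult (s ^ Suc i) (cat (zw (Suc (Suc i) * k)) (?Q (Suc m - Suc i))))"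
    by (rule sum.atMost_Suc_shift)
  have s3: "nc_smult (s ^ 0) (cat (zw (Suc 0 * k)) (?Q (Suc m - 0))) = cat (zw k) (?Q (Suc m))"
    by (simp only: power_0 smult_one mult_Suc mult_0 add_0_right diff_zero)
  have s4: "(\<Sum>i\<le>m. nc_smult (s ^ Suc i) (cat (zw (Suc (Suc i) * k)) (?Q (Suc m - Suc i))))
     = (\<Sum>i\<le>m. nc_smult s (cat (wd (replicate k Lx)) (nc_smult (s ^ i) (cat (zw (Suc i * k)) (?Q (m - i))))))"
    by (rule sum.cong[OF refl]) (simp only: cat_smult2 smult_smult z2 diff_Suc_Suc power_Suc)
  have s5: "(\<Sum>i\<le>m. nc_smult s (cat (wd (replicate k Lx)) (nc_smult (s ^ i) (cat (zw (Suc i * k)) (?Q (m - i))))))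
     = nc_smult s (cat (wd (replicate k Lx)) (?Q (Suc m)))"
    by (simp only: Q_Suc[of k s m] cat_sum2 smult_sum2)
  show ?thesis using s1 s2 s3 s4 s5 by (simp only:)
qed

lemma S_word_zkn_geom: assumes k: "1 \<le> k" shows "S_word s (zkn k n) = geom (Ys k s) n"
proof -
  have "S_word s (zkn k n) = geom (Ys k s) n \<and> S_word s (zkn k (Suc n)) = geom (Ys k s) (Suc n)"
  proof (induction n)
    case 0 then show ?case by (simp add: S_word_zkn0 Q0 S_word_zkn1 Q1)
  next
    case (Suc n) then show ?case by (simp add: S_word_zknSS[OF k] QSS[OF k])
  qed
  then show ?thesis by simp
qed

lemma coarsen_ne: "p \<in> set (coarsen ks) \<Longrightarrow> ks \<noteq> [] \<Longrightarrow> p \<noteq> []"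
  by (induction ks arbitrary: p rule: coarsen.induct) auto

lemma coarsen_len: "p \<in> set (coarsen ks) \<Longrightarrow> length p \<le> length ks"
  by (induction ks arbitrary: p rule: coarsen.induct) (auto, fastforce)

lemma coarsen_lb: "p \<in> set (coarsen ks) \<Longrightarrow> \<forall>x\<in>set ks. c \<le> x \<Longrightarrow> \<forall>x\<in>set p. c \<le> x"
proof (induction ks arbitrary: p rule: coarsen.induct)
  case (3 k l ks)
  from 3(3) obtain q where q: "q \<in> set (coarsen (l # ks))" and pq: "p = k # q \<or> p = (k + hd q) # tl q"
    by auto
  have qc: "\<forall>x\<in>set q. c \<le> x" using 3 q by auto
  have "q \<noteq> []" using coarsen_ne q by blast
  then show ?case using pq qc 3(4) by (cases q) auto
qed auto

lemma cat_sum_list: "cat h (sum_list (map f L)) = sum_list (map (\<lambda>x. cat h (f x)) L)"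
  by (induction L) (simp_all only: list.map sum_list.Cons sum_list.Nil cat_add2 cat_zero2)
lemma smult_sum_list: "nc_smult c (sum_list (map f L)) = sum_list (map (\<lambda>x. nc_smult c (f x)) L)"
  by (induction L) (simp_all only: list.map sum_list.Cons sum_list.Nil smult_add2 smult_zero2)

definition Pc :: "nat \<Rightarrow> rat poly \<Rightarrow> nat \<Rightarrow> nc" where
  "Pc k s n = sum_list (map (\<lambda>p. nc_smult (s ^ (n - length p)) (wd (zs p))) (coarsen (replicate n k)))"

lemma Pc0: "Pc k s 0 = wd []" by (simp add: Pc_def)
lemma Pc1: "Pc k s (Suc 0) = zw k" by (simp add: Pc_def zs_def zw_def)
lemma PcSS: assumes k: "1 \<le> k"
  shows "Pc k s (Suc (Suc m)) = cat (zw k) (Pc k s (Suc m))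
    + nc_smult s (cat (wd (replicate k Lx)) (Pc k s (Suc m)))"
proof -
  define L where "L = coarsen (replicate (Suc m) k)"
  have L: "coarsen (replicate (Suc (Suc m)) k) = map (\<lambda>p. k # p) L @ map (\<lambda>p. (k + hd p) # tl p) L"
    by (simp add: L_def)
  have props: "p \<noteq> [] \<and> length p \<le> Suc m \<and> (\<forall>x\<in>set p. 1 \<le> x)" if "p \<in> set L" for p
  proof (intro conjI)
    show "p \<noteq> []" using coarsen_ne[of p "replicate (Suc m) k"] that by (simp add: L_def)
    show "length p \<le> Suc m" using coarsen_len[of p "replicate (Suc m) k"] that by (simp add: L_def)
    show "\<forall>x\<in>set p. 1 \<le> x" using coarsen_lb[of p "replicate (Suc m) k" 1] that k by (simp add: L_def)
  qed
  have A: "sum_list (map (\<lambda>p. nc_smult (s ^ (Suc (Suc m) - length p)) (wd (zs p))) (map (\<lambda>p. k # p) L))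
     = cat (zw k) (Pc k s (Suc m))"
    unfolding Pc_def L_def[symmetric] cat_sum_list
    by (simp add: o_def cat_smult2 zw_def z_app_zs)
  have B: "sum_list (map (\<lambda>p. nc_smult (s ^ (Suc (Suc m) - length p)) (wd (zs p))) (map (\<lambda>p. (k + hd p) # tl p) L))
     = nc_smult s (cat (wd (replicate k Lx)) (Pc k s (Suc m)))"
    unfolding Pc_def L_def[symmetric] cat_sum_list smult_sum_list map_map
  proof (rule arg_cong[where f=sum_list], rule map_cong[OF refl])
    fix p assume "p \<in> set L"
    then have p: "p \<noteq> []" "length p \<le> Suc m" "1 \<le> hd p" using props by auto
    have e: "Suc (Suc m) - length ((k + hd p) # tl p) = Suc (Suc m - length p)"
      using p by (cases p) auto
    have zz: "zs ((k + hd p) # tl p) = replicate k Lx @ zs p"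
      using p by (cases p) (auto simp: z_app_zs rep_z)
    show "((\<lambda>p. nc_smult (s ^ (Suc (Suc m) - length p)) (wd (zs p))) \<circ> (\<lambda>p. (k + hd p) # tl p)) p =
         nc_smult s (cat (wd (replicate k Lx)) (nc_smult (s ^ (Suc m - length p)) (wd (zs p))))"
      by (simp only: o_def e zz) (simp add: cat_smult2)
  qed
  show ?thesis
    unfolding Pc_def[of k s "Suc (Suc m)"] L sum_list_append map_append
    using A B by (simp add: Pc_def)
qed

lemma S_word_zkn_Pc: assumes k: "1 \<le> k" shows "S_word s (zkn k n) = Pc k s n"
proof -
  have "S_word s (zkn k n) = Pc k s n \<and> S_word s (zkn k (Suc n)) = Pc k s (Suc n)"
  proof (induction n)
    case 0 then show ?case by (simp add: S_word_zkn0 Pc0 S_word_zkn1 Pc1)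
  next
    case (Suc n) then show ?case by (simp add: S_word_zknSS[OF k] PcSS[OF k])
  qed
  then show ?thesis by simp
qed


definition cX :: "nat \<Rightarrow> rat poly" where "cX i = (if 2 \<le> i then tvar ^ (i - 2) * (tvar - 1) else 0)"
definition d1 :: "nat \<Rightarrow> rat poly" where "d1 r = (if 1 \<le> r then 1 else 0)"

lemma Xser_lser: "Xser k = lser k cX"
  by (rule ext) (simp add: Xser_def lser_def cX_def nc_zero_eq)

lemma Ys1: "Ys k 1 = lser k d1"
  by (simp add: Ys_def d1_def fun_eq_iff lser_def)

lemma cX_partial: "1 \<le> s \<Longrightarrow> 1 + (\<Sum>i\<le>s. cX i) = tvar ^ (s - 1)"
proof (induction s rule: dec_induct)
  case base then show ?case by (simp add: cX_def)
next
  case (step s)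
  have "1 + (\<Sum>i\<le>Suc s. cX i) = tvar ^ (s - 1) + cX (Suc s)"
    using step by (simp add: add.assoc[symmetric])
  also have "\<dots> = tvar ^ (s - 1) + tvar ^ (s - 1) * (tvar - 1)"
    using step by (simp add: cX_def)
  also have "\<dots> = tvar ^ (s - 1) * tvar" by (simp add: algebra_simps)
  also have "\<dots> = tvar ^ (Suc s - 1)" using step
    by (metis Suc_diff_le diff_Suc_1 power_Suc2)
  finally show ?case .
qed

lemma e_comp: "cX s + d1 s + (\<Sum>i\<le>s. cX i * d1 (s - i)) = (if 1 \<le> s then tvar ^ (s - 1) else 0)"
proof (cases "s = 0")
  case True then show ?thesis by (simp add: cX_def d1_def)
next
  case False
  have "(\<Sum>i\<le>s. cX i * d1 (s - i)) = (\<Sum>i<s. cX i * d1 (s - i)) + cX s * d1 0"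
    by (simp add: lessThan_Suc_atMost[symmetric])
  also have "(\<Sum>i<s. cX i * d1 (s - i)) = (\<Sum>i<s. cX i)"
    by (rule sum.cong) (auto simp: d1_def)
  finally have "cX s + d1 s + (\<Sum>i\<le>s. cX i * d1 (s - i)) = 1 + ((\<Sum>i<s. cX i) + cX s)"
    using False by (simp add: d1_def algebra_simps)
  also have "(\<Sum>i<s. cX i) + cX s = (\<Sum>i\<le>s. cX i)"
    by (simp add: lessThan_Suc_atMost[symmetric])
  finally have "cX s + d1 s + (\<Sum>i\<le>s. cX i * d1 (s - i)) = 1 + (\<Sum>i\<le>s. cX i)" .
  then show ?thesis using cX_partial[of s] False by simp
qed

lemma pow_zu: "ser_pow (zu k) m n = (if m = n then wd (zkn k n) else 0)"
proof (induction m arbitrary: n)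
  case 0 then show ?case by (simp add: ser_one_def nc_zero_eq zkn_def)
next
  case (Suc m)
  have zu: "zu k i = (if i = 1 then zw k else 0)" for i by (simp add: zu_def nc_zero_eq)
  have "ser_pow (zu k) (Suc m) n = (\<Sum>i\<le>n. cat (zu k i) (ser_pow (zu k) m (n - i)))"
    by (simp add: ser_cat_eq)
  also have "\<dots> = (\<Sum>i\<le>n. if i = 1 then cat (zw k) (ser_pow (zu k) m (n - 1)) else 0)"
    by (rule sum.cong) (auto simp: zu)
  also have "\<dots> = (if 1 \<le> n then cat (zw k) (ser_pow (zu k) m (n - 1)) else 0)"
    by (simp add: sum.delta)
  also have "\<dots> = (if Suc m = n then wd (zkn k n) else 0)"
    using Suc by (cases n) (auto simp: zw_def zkn_Suc)
  finally show ?case .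
qed

lemma geom_zu: "geom (zu k) n = wd (zkn k n)"
  by (simp add: geom_eq pow_zu sum.delta')

lemma ser_S_zu: "1 \<le> k \<Longrightarrow> ser_S s (geom (zu k)) = geom (Ys k s)"
  by (rule ext) (simp add: ser_S_def geom_zu S_map_wd S_word_zkn_geom)

theorem part1:
  assumes kk: "1 \<le> k"
  shows "ser_S tvar (geom (zu k)) n = ser_harm (geom (Xser k)) (ser_S 1 (geom (zu k))) n"
proof -
  have "lser k (\<lambda>s. cX s + d1 s + (\<Sum>i\<le>s. cX i * d1 (s - i))) = Ys k tvar"
    unfolding e_comp Ys_def by simp
  moreover have "ser_harm (geom (lser k cX)) (geom (lser k d1)) n
     = geom (lser k (\<lambda>s. cX s + d1 s + (\<Sum>i\<le>s. cX i * d1 (s - i)))) n"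
    by (rule main_series) (use kk in \<open>auto simp: cX_def d1_def\<close>)
  ultimately show ?thesis
    using kk by (simp add: ser_S_zu Xser_lser Ys1)
qed


definition wt :: "nat \<Rightarrow> nat \<Rightarrow> rat poly" where "wt m j = tvar ^ (j - 2 * m) * (tvar - 1) ^ m"
definition Gam :: "nat \<Rightarrow> nat \<Rightarrow> nat \<Rightarrow> nc" where
  "Gam k m j = (\<Sum>is\<in>comps m j. wd (zs (map (\<lambda>i. i * k) is)))"

lemma comps_0: "comps 0 j = (if j = 0 then {[]} else {})"
  by (auto simp: comps_def)

lemma comps_Suc: "comps (Suc m) j = (\<Union>i\<in>{2..j}. (\<lambda>is. i # is) ` comps m (j - i))"
proof
  show "comps (Suc m) j \<subseteq> (\<Union>i\<in>{2..j}. (\<lambda>is. i # is) ` comps m (j - i))"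
  proof
    fix xs assume xs: "xs \<in> comps (Suc m) j"
    then obtain i r where ir: "xs = i # r" by (cases xs) (auto simp: comps_def)
    then have "length r = m" "i + sum_list r = j" "2 \<le> i" "\<forall>x\<in>set r. 2 \<le> x"
      using xs by (auto simp: comps_def)
    then have "i \<in> {2..j}" "r \<in> comps m (j - i)" by (auto simp: comps_def)
    then show "xs \<in> (\<Union>i\<in>{2..j}. (\<lambda>is. i # is) ` comps m (j - i))"
      using ir by blast
  qed
  show "(\<Union>i\<in>{2..j}. (\<lambda>is. i # is) ` comps m (j - i)) \<subseteq> comps (Suc m) j"
    by (auto simp: comps_def)
qed

lemma finite_comps[simp]: "finite (comps m j)"
  by (induction m arbitrary: j) (auto simp: comps_0 comps_Suc)

lemma sum_list_ge2: "\<forall>x\<in>set xs. 2 \<le> x \<Longrightarrow> 2 * length xs \<le> sum_list xs"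
  by (induction xs) auto

lemma comps_bound: "is \<in> comps m j \<Longrightarrow> 2 * m \<le> j"
  using sum_list_ge2[of "is"] by (auto simp: comps_def)

lemma fin_Gam[simp]: "fin (Gam k m j)" by (simp add: Gam_def)

lemma pow_X: "ser_pow (Xser k) m j = nc_smult (wt m j) (Gam k m j)"
proof (induction m arbitrary: j)
  case 0 then show ?case by (simp add: ser_one_def nc_zero_eq comps_0 Gam_def wt_def fun_eq_iff)
next
  case (Suc m)
  define W where "W xs = wd (zs (map (\<lambda>i. i * k) xs))" for xs
  have "ser_pow (Xser k) (Suc m) j = (\<Sum>i\<le>j. cat (Xser k i) (ser_pow (Xser k) m (j - i)))"
    by (simp add: ser_cat_eq)
  also have "\<dots> = (\<Sum>i\<le>j. nc_smult (cX i * wt m (j - i)) (cat (zw (i * k)) (Gam k m (j - i))))"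
  proof (rule sum.cong[OF refl])
    fix i
    have Xi: "Xser k i = nc_smult (cX i) (zw (i * k))" by (simp add: Xser_lser lser_def)
    show "cat (Xser k i) (ser_pow (Xser k) m (j - i)) = nc_smult (cX i * wt m (j - i)) (cat (zw (i * k)) (Gam k m (j - i)))"
      unfolding Xi Suc by (simp add: cat_smult1 cat_smult2 mult.commute)
  qed
  also have "\<dots> = (\<Sum>i\<in>{2..j}. nc_smult (cX i * wt m (j - i)) (cat (zw (i * k)) (Gam k m (j - i))))"
    by (rule sum.mono_neutral_right) (auto simp: cX_def)
  also have "\<dots> = (\<Sum>i\<in>{2..j}. \<Sum>r\<in>comps m (j - i). nc_smult (wt (Suc m) j) (W (i # r)))"
  proof (rule sum.cong[OF refl])
    fix i assume i: "i \<in> {2..j}"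
    have "cat (zw (i * k)) (Gam k m (j - i)) = (\<Sum>r\<in>comps m (j - i). W (i # r))"
      by (simp add: Gam_def cat_sum2 zw_def W_def z_app_zs)
    moreover have "cX i * wt m (j - i) = wt (Suc m) j" if "r \<in> comps m (j - i)" for r
    proof -
      have b: "2 * m \<le> j - i" using comps_bound[OF that] .
      have e: "j - 2 * Suc m = (i - 2) + (j - i - 2 * m)" using b i by auto
      have "cX i * wt m (j - i) = (tvar ^ (i - 2) * (tvar - 1)) * (tvar ^ (j - i - 2 * m) * (tvar - 1) ^ m)"
        using i by (simp add: cX_def wt_def)
      also have "\<dots> = tvar ^ ((i - 2) + (j - i - 2 * m)) * (tvar - 1) ^ Suc m"
        by (simp only: power_add power_Suc mult_ac)
      also have "\<dots> = wt (Suc m) j" by (simp only: wt_def e)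
      finally show ?thesis .
    qed
    ultimately show "nc_smult (cX i * wt m (j - i)) (cat (zw (i * k)) (Gam k m (j - i)))
       = (\<Sum>r\<in>comps m (j - i). nc_smult (wt (Suc m) j) (W (i # r)))"
      by (simp add: smult_sum2)
  qed
  also have "\<dots> = nc_smult (wt (Suc m) j) (Gam k (Suc m) j)"
  proof -
    have "Gam k (Suc m) j = (\<Sum>i\<in>{2..j}. sum W ((\<lambda>is. i # is) ` comps m (j - i)))"
      unfolding Gam_def comps_Suc W_def[symmetric]
      by (rule sum.UNION_disjoint) auto
    also have "\<dots> = (\<Sum>i\<in>{2..j}. \<Sum>r\<in>comps m (j - i). W (i # r))"
      by (rule sum.cong[OF refl]) (simp add: sum.reindex)
    finally show ?thesis by (simp add: smult_sum2)
  qed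
  finally show ?case .
qed

lemma geom_X: "geom (Xser k) j = (\<Sum>m\<le>j. nc_smult (wt m j) (Gam k m j))"
  by (simp add: geom_eq pow_X)

lemma GX0: "geom (Xser k) 0 = wd []"
  by (simp add: geom_X Gam_def comps_0 wt_def)

lemma Gam_empty: "\<not> 2 * m \<le> j \<Longrightarrow> Gam k m j = 0"
  unfolding Gam_def using comps_bound by (metis all_not_in_conv sum.empty)

lemma GX1: "geom (Xser k) (Suc 0) = 0"
  by (simp add: geom_X Gam_def comps_0 comps_Suc)

lemma GXj: assumes j: "2 \<le> j"
  shows "geom (Xser k) j = (\<Sum>m\<in>{1..j div 2}. nc_smult (wt m j) (Gam k m j))"
  unfolding geom_X
proof (rule sum.mono_neutral_right)
  show "\<forall>m\<in>{..j} - {1..j div 2}. nc_smult (wt m j) (Gam k m j) = 0"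
  proof
    fix m assume m: "m \<in> {..j} - {1..j div 2}"
    show "nc_smult (wt m j) (Gam k m j) = 0"
    proof (cases "m = 0")
      case True then show ?thesis using j by (simp add: Gam_def comps_0)
    next
      case False then have "\<not> 2 * m \<le> j" using m by auto
      then show ?thesis by (simp add: Gam_empty)
    qed
  qed
qed auto


lemma S_map_zkn: "1 \<le> k \<Longrightarrow> S_map s (wd (concat (replicate n (z k)))) = geom (Ys k s) n"
  using S_word_zkn_geom[of k s n] by (simp add: S_map_wd zkn_def)

lemma Gam_fun: "(\<lambda>v. \<Sum>is\<in>comps m j. wd (zs (map (\<lambda>i. i * k) is)) v) = Gam k m j"
  by (simp add: Gam_def fun_eq_iff sum_fun_apply)

lemma sum_split01: "f (Suc 0) = 0 \<Longrightarrow> (\<Sum>j\<le>n. f j) = f 0 + (\<Sum>j\<in>{2..n}. f j)"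
proof -
  assume f1: "f (Suc 0) = (0::'a::comm_monoid_add)"
  have "(\<Sum>j\<le>n. f j) = (\<Sum>j\<in>insert 0 {2..n}. f j)"
    by (rule sum.mono_neutral_right) (use f1 in \<open>auto simp: not_le\<close>, metis One_nat_def less_2_cases le_0_eq)
  also have "\<dots> = f 0 + (\<Sum>j\<in>{2..n}. f j)" by simp
  finally show ?thesis .
qed

theorem part2:
  assumes kk: "1 \<le> k"
  shows "S_map tvar (wd (concat (replicate n (z k))))
               = nc_add (S_map 1 (wd (concat (replicate n (z k)))))
                   (\<lambda>w. \<Sum>j\<in>{2..n}. \<Sum>m\<in>{1..j div 2}.
                      tvar ^ (j - 2 * m) * (tvar - 1) ^ m *
                      hprod (\<lambda>v. \<Sum>is\<in>comps m j. wd (zs (map (\<lambda>i. i * k) is)) v)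
                            (S_map 1 (wd (concat (replicate (n - j) (z k))))) w)"
proof -
  let ?B = "geom (Ys k 1)"
  have fB: "fin (?B m)" "h1 (?B m)" for m by (simp_all add: Ys_def)
  have "S_map tvar (wd (concat (replicate n (z k)))) = ser_harm (geom (Xser k)) (ser_S 1 (geom (zu k))) n"
    using part1[OF kk, of n] ser_S_zu[OF kk, of tvar] S_map_zkn[OF kk, of tvar n] by simp
  also have "\<dots> = (\<Sum>j\<le>n. hprod (geom (Xser k) j) (?B (n - j)))"
    by (simp add: ser_harm_def ser_S_zu[OF kk] fun_eq_iff sum_fun_apply)
  also have "\<dots> = hprod (geom (Xser k) 0) (?B (n - 0)) + (\<Sum>j\<in>{2..n}. hprod (geom (Xser k) j) (?B (n - j)))"
    by (rule sum_split01) (simp add: GX1)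
  also have "hprod (geom (Xser k) 0) (?B (n - 0)) = ?B n"
    using fB by (simp add: GX0 hprod_one1)
  also have "(\<Sum>j\<in>{2..n}. hprod (geom (Xser k) j) (?B (n - j)))
      = (\<Sum>j\<in>{2..n}. \<Sum>m\<in>{1..j div 2}. nc_smult (wt m j) (hprod (Gam k m j) (?B (n - j))))"
  proof (rule sum.cong[OF refl])
    fix j assume "j \<in> {2..n}"
    then have j: "2 \<le> j" by simp
    show "hprod (geom (Xser k) j) (?B (n - j)) = (\<Sum>m\<in>{1..j div 2}. nc_smult (wt m j) (hprod (Gam k m j) (?B (n - j))))"
      unfolding GXj[OF j] using fB by (simp add: hprod_sum1 hprod_smult1)
  qed
  finally have eq: "S_map tvar (wd (concat (replicate n (z k)))) = ?B n
     + (\<Sum>j\<in>{2..n}. \<Sum>m\<in>{1..j div 2}. nc_smult (wt m j) (hprod (Gam k m j) (?B (n - j))))" .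
  have eq2: "geom (Ys k tvar) n = ?B n
     + (\<Sum>j\<in>{2..n}. \<Sum>m\<in>{1..j div 2}. nc_smult (wt m j) (hprod (Gam k m j) (?B (n - j))))"
    using eq S_map_zkn[OF kk, of tvar n] by metis
  show ?thesis
    unfolding nc_add_eq Gam_fun S_map_zkn[OF kk] eq2
    by (simp add: fun_eq_iff sum_fun_apply wt_def)
qed


lemma infsum_exhaust:
  fixes f :: "'a \<Rightarrow> real"
  assumes fin: "\<And>N. finite (D N)" and sub: "\<And>N. D N \<subseteq> A"
    and mono: "\<And>N N'. N \<le> N' \<Longrightarrow> D N \<subseteq> D N'"
    and ex: "\<And>x. x \<in> A \<Longrightarrow> \<exists>N. x \<in> D N" and nn: "\<And>x. x \<in> A \<Longrightarrow> 0 \<le> f x"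
    and lim: "(\<lambda>N. sum f (D N)) \<longlonglongrightarrow> L"
  shows "infsum f A = L"
proof -
  have inc: "incseq (\<lambda>N. sum f (D N))"
  proof (rule incseq_SucI)
    fix N show "sum f (D N) \<le> sum f (D (Suc N))"
      by (rule sum_mono2[OF fin mono]) (use sub nn in auto)
  qed
  have le: "sum f (D N) \<le> L" for N using incseq_le[OF inc lim] .
  have cover: "finite F \<Longrightarrow> F \<subseteq> A \<Longrightarrow> \<exists>N. F \<subseteq> D N" for F
  proof (induction F rule: finite_induct)
    case empty then show ?case by simp
  next
    case (insert x F)
    then obtain N1 where N1: "F \<subseteq> D N1" by auto
    have "x \<in> A" using insert.prems by auto
    then obtain N2 where N2: "x \<in> D N2" using ex by blast
    have "insert x F \<subseteq> D (max N1 N2)" using N1 N2 mono[of N1 "max N1 N2"] mono[of N2 "max N1 N2"] by auto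
    then show ?case by blast
  qed
  have bdd: "bdd_above (sum f ` {F. F \<subseteq> A \<and> finite F})"
  proof (rule bdd_aboveI2)
    fix F assume F: "F \<in> {F. F \<subseteq> A \<and> finite F}"
    then have "F \<subseteq> A" "finite F" by auto
    then obtain N where N: "F \<subseteq> D N" using cover by blast
    have "sum f F \<le> sum f (D N)"
      by (rule sum_mono2[OF fin N]) (use sub nn in auto)
    then show "sum f F \<le> L" using le[of N] by linarith
  qed
  have summ: "f summable_on A" by (rule nonneg_bdd_above_summable_on[OF nn bdd])
  have "(sum f \<longlongrightarrow> infsum f A) (finite_subsets_at_top A)"
    using has_sum_infsum[OF summ] by (simp add: has_sum_def)
  moreover have "filterlim D (finite_subsets_at_top A) sequentially"
    unfolding filterlim_finite_subsets_at_top
  proof (intro allI impI)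
    fix X assume "finite X \<and> X \<subseteq> A"
    then have "finite X" "X \<subseteq> A" by auto
    then obtain N0 where N0: "X \<subseteq> D N0" using cover by blast
    show "\<forall>\<^sub>F y in sequentially. finite (D y) \<and> X \<subseteq> D y \<and> D y \<subseteq> A"
      by (rule eventually_sequentiallyI[of N0]) (use fin sub N0 mono in blast)
  qed
  ultimately have "(\<lambda>N. sum f (D N)) \<longlonglongrightarrow> infsum f A"
    by (rule filterlim_compose)
  then show ?thesis using lim LIMSEQ_unique by blast
qed

fun zt :: "nat \<Rightarrow> nat list \<Rightarrow> real" where
  "zt N [] = 1"
| "zt N (a # ks) = (\<Sum>m\<in>{1..<N}. zt m ks / real m ^ a)"

fun zst :: "nat \<Rightarrow> nat list \<Rightarrow> real" where
  "zst N [] = 1"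
| "zst N (a # ks) = (\<Sum>m\<in>{1..<N}. zst (Suc m) ks / real m ^ a)"

definition Fk :: "nat list \<Rightarrow> nat list \<Rightarrow> real" where
  "Fk ks ms = (\<Prod>j<length ks. 1 / real (ms ! j) ^ (ks ! j))"

lemma Fk_Cons: "Fk (a # ks) (m # ms) = Fk ks ms / real m ^ a"
  unfolding Fk_def length_Cons prod.lessThan_Suc_shift by simp

lemma Fk_nonneg: "0 \<le> Fk ks ms" by (simp add: Fk_def prod_nonneg)

definition Dm :: "nat list \<Rightarrow> nat list set" where
  "Dm ks = {ms. length ms = length ks \<and> sorted_wrt (>) ms \<and> (\<forall>m\<in>set ms. 0 < m)}"
definition Ds :: "nat list \<Rightarrow> nat list set" where
  "Ds ks = {ms. length ms = length ks \<and> sorted_wrt (\<ge>) ms \<and> (\<forall>m\<in>set ms. 0 < m)}"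

definition DN :: "nat list \<Rightarrow> nat \<Rightarrow> nat list set" where
  "DN ks N = {ms \<in> Dm ks. \<forall>m\<in>set ms. m < N}"
definition DSN :: "nat list \<Rightarrow> nat \<Rightarrow> nat list set" where
  "DSN ks N = {ms \<in> Ds ks. \<forall>m\<in>set ms. m < N}"

lemma mzv_eq: "mzv ks = infsum (Fk ks) (Dm ks)"
  unfolding mzv_def Fk_def Dm_def by (rule refl)
lemma mzv_star_eq: "mzv_star ks = infsum (Fk ks) (Ds ks)"
  unfolding mzv_star_def Fk_def Ds_def by (rule refl)

lemma finite_DN: "finite (DN ks N)"
  by (rule finite_subset[of _ "{ms. set ms \<subseteq> {..<N} \<and> length ms = length ks}"])
    (auto simp: DN_def Dm_def intro: finite_lists_length_eq)
lemma finite_DSN: "finite (DSN ks N)"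
  by (rule finite_subset[of _ "{ms. set ms \<subseteq> {..<N} \<and> length ms = length ks}"])
    (auto simp: DSN_def Ds_def intro: finite_lists_length_eq)

lemma DN_Cons: "DN (a # ks) N = (\<lambda>(m, ms). m # ms) ` (SIGMA m:{1..<N}. DN ks m)"
proof
  show "DN (a # ks) N \<subseteq> (\<lambda>(m, ms). m # ms) ` (SIGMA m:{1..<N}. DN ks m)"
  proof
    fix xs assume xs: "xs \<in> DN (a # ks) N"
    then obtain m ms where e: "xs = m # ms" by (cases xs) (auto simp: DN_def Dm_def)
    then have "m \<in> {1..<N}" "ms \<in> DN ks m" using xs by (auto simp: DN_def Dm_def)
    then show "xs \<in> (\<lambda>(m, ms). m # ms) ` (SIGMA m:{1..<N}. DN ks m)" using e by force
  qed
  show "(\<lambda>(m, ms). m # ms) ` (SIGMA m:{1..<N}. DN ks m) \<subseteq> DN (a # ks) N"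
    by (auto simp: DN_def Dm_def) (meson less_trans)
qed

lemma DSN_Cons: "DSN (a # ks) N = (\<lambda>(m, ms). m # ms) ` (SIGMA m:{1..<N}. DSN ks (Suc m))"
proof
  show "DSN (a # ks) N \<subseteq> (\<lambda>(m, ms). m # ms) ` (SIGMA m:{1..<N}. DSN ks (Suc m))"
  proof
    fix xs assume xs: "xs \<in> DSN (a # ks) N"
    then obtain m ms where e: "xs = m # ms" by (cases xs) (auto simp: DSN_def Ds_def)
    then have "m \<in> {1..<N}" "ms \<in> DSN ks (Suc m)" using xs by (auto simp: DSN_def Ds_def less_Suc_eq_le)
    then show "xs \<in> (\<lambda>(m, ms). m # ms) ` (SIGMA m:{1..<N}. DSN ks (Suc m))" using e by force
  qed
  show "(\<lambda>(m, ms). m # ms) ` (SIGMA m:{1..<N}. DSN ks (Suc m)) \<subseteq> DSN (a # ks) N"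
    by (auto simp: DSN_def Ds_def less_Suc_eq_le) (meson le_less_trans)
qed

lemma zt_DN: "zt N ks = sum (Fk ks) (DN ks N)"
proof (induction ks arbitrary: N)
  case Nil
  have "DN [] N = {[]}" by (auto simp: DN_def Dm_def)
  then show ?case by (simp add: Fk_def)
next
  case (Cons a ks)
  have inj: "inj_on (\<lambda>(m, ms). m # ms) (SIGMA m:{1..<N}. DN ks m)"
    by (auto simp: inj_on_def)
  have "sum (Fk (a # ks)) (DN (a # ks) N) = (\<Sum>(m, ms)\<in>(SIGMA m:{1..<N}. DN ks m). Fk ks ms / real m ^ a)"
    unfolding DN_Cons sum.reindex[OF inj] by (rule sum.cong) (auto simp: Fk_Cons)
  also have "\<dots> = (\<Sum>m\<in>{1..<N}. \<Sum>ms\<in>DN ks m. Fk ks ms / real m ^ a)"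
    by (rule sum.Sigma[symmetric]) (auto simp: finite_DN)
  also have "\<dots> = zt N (a # ks)"
    by (simp add: Cons sum_divide_distrib)
  finally show ?case ..
qed

lemma zst_DSN: "zst N ks = sum (Fk ks) (DSN ks N)"
proof (induction ks arbitrary: N)
  case Nil
  have "DSN [] N = {[]}" by (auto simp: DSN_def Ds_def)
  then show ?case by (simp add: Fk_def)
next
  case (Cons a ks)
  have inj: "inj_on (\<lambda>(m, ms). m # ms) (SIGMA m:{1..<N}. DSN ks (Suc m))"
    by (auto simp: inj_on_def)
  have "sum (Fk (a # ks)) (DSN (a # ks) N) = (\<Sum>(m, ms)\<in>(SIGMA m:{1..<N}. DSN ks (Suc m)). Fk ks ms / real m ^ a)"
    unfolding DSN_Cons sum.reindex[OF inj] by (rule sum.cong) (auto simp: Fk_Cons)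
  also have "\<dots> = (\<Sum>m\<in>{1..<N}. \<Sum>ms\<in>DSN ks (Suc m). Fk ks ms / real m ^ a)"
    by (rule sum.Sigma[symmetric]) (auto simp: finite_DSN)
  also have "\<dots> = zst N (a # ks)"
    by (simp add: Cons sum_divide_distrib)
  finally show ?case ..
qed

lemma zt_nonneg: "0 \<le> zt N ks"
  by (induction ks arbitrary: N) (auto intro!: sum_nonneg divide_nonneg_nonneg)

lemma zt_mono: "N \<le> N' \<Longrightarrow> zt N ks \<le> zt N' ks"
proof (cases ks)
  case (Cons a ks')
  assume "N \<le> N'"
  then show ?thesis unfolding Cons
    by (simp, intro sum_mono2) (auto intro!: divide_nonneg_nonneg zt_nonneg)
qed simp

lemma sum_inv_sq_aux: "1 \<le> M \<Longrightarrow> (\<Sum>m=1..M. 1 / real m ^ 2) \<le> 2 - 1 / real M"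
proof (induction M rule: dec_induct)
  case base then show ?case by simp
next
  case (step M)
  have "(\<Sum>m=1..Suc M. 1 / real m ^ 2) \<le> 2 - 1 / real M + 1 / real (Suc M) ^ 2"
    using step by simp
  also have "\<dots> \<le> 2 - 1 / real (Suc M)"
  proof -
    have M: "1 \<le> real M" using step by simp
    have e: "1 / real M - 1 / real (Suc M) = 1 / (real M * real (Suc M))"
      using M by (simp add: field_simps)
    have "1 / real (Suc M) ^ 2 \<le> 1 / (real M * real (Suc M))"
      by (rule divide_left_mono) (use M in \<open>auto simp: power2_eq_square intro!: mult_right_mono\<close>)
    then have "1 / real (Suc M) ^ 2 \<le> 1 / real M - 1 / real (Suc M)" using e by simp
    then show ?thesis by linarith
  qed
  finally show ?case .
qed

lemma sum_inv_sq: "(\<Sum>m\<in>{1..<N}. 1 / real m ^ 2) \<le> 2"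
proof (cases "N \<le> 1")
  case True then show ?thesis by simp
next
  case False
  then have "{1..<N} = {1..N - 1}" by auto
  then have "(\<Sum>m\<in>{1..<N}. 1 / real m ^ 2) = (\<Sum>m=1..N-1. 1 / real m ^ 2)" by simp
  also have "\<dots> \<le> 2 - 1 / real (N - 1)"
    using False by (intro sum_inv_sq_aux) auto
  also have "\<dots> \<le> 2" by simp
  finally show ?thesis .
qed

lemma zt_bound: "\<forall>x\<in>set ks. 2 \<le> x \<Longrightarrow> zt N ks \<le> 2 ^ length ks"
proof (induction ks arbitrary: N)
  case Nil then show ?case by simp
next
  case (Cons a ks)
  have a: "2 \<le> a" using Cons by simp
  have "zt N (a # ks) = (\<Sum>m\<in>{1..<N}. zt m ks / real m ^ a)" by simp
  also have "\<dots> \<le> (\<Sum>m\<in>{1..<N}. 2 ^ length ks * (1 / real m ^ 2))"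
  proof (rule sum_mono)
    fix m assume m: "m \<in> {1..<N}"
    have "zt m ks \<le> 2 ^ length ks" using Cons by simp
    moreover have "real m ^ 2 \<le> real m ^ a" using m a by (intro power_increasing) auto
    moreover have "0 < real m ^ 2" using m by simp
    ultimately show "zt m ks / real m ^ a \<le> 2 ^ length ks * (1 / real m ^ 2)"
      using zt_nonneg[of m ks] by (simp add: frac_le)
  qed
  also have "\<dots> = 2 ^ length ks * (\<Sum>m\<in>{1..<N}. 1 / real m ^ 2)"
    by (simp add: sum_distrib_left)
  also have "\<dots> \<le> 2 ^ length ks * 2"
    using sum_inv_sq[of N] by (intro mult_left_mono) auto
  finally show ?case by simp
qed

lemma zt_lim: assumes ks: "\<forall>x\<in>set ks. 2 \<le> x" shows "(\<lambda>N. zt N ks) \<longlonglongrightarrow> mzv ks"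
proof -
  have inc: "incseq (\<lambda>N. zt N ks)" by (rule incseq_SucI) (rule zt_mono, simp)
  obtain L where L: "(\<lambda>N. zt N ks) \<longlonglongrightarrow> L"
    using incseq_convergent[OF inc, of "2 ^ length ks"] zt_bound[OF ks] by blast
  have "infsum (Fk ks) (Dm ks) = L"
  proof (rule infsum_exhaust[where D="DN ks"])
    show "finite (DN ks N)" for N by (rule finite_DN)
    show "DN ks N \<subseteq> Dm ks" for N by (auto simp: DN_def)
    show "N \<le> N' \<Longrightarrow> DN ks N \<subseteq> DN ks N'" for N N' by (auto simp: DN_def)
    show "\<exists>N. x \<in> DN ks N" if "x \<in> Dm ks" for x
      using that member_le_sum_list[of _ x] by (auto simp: DN_def intro!: exI[of _ "Suc (sum_list x)"] le_imp_less_Suc)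
    show "0 \<le> Fk ks x" for x by (rule Fk_nonneg)
    show "(\<lambda>N. sum (Fk ks) (DN ks N)) \<longlonglongrightarrow> L" using L by (simp add: zt_DN)
  qed
  then show ?thesis using L by (simp add: mzv_eq)
qed

lemma zt_Suc: "1 \<le> m \<Longrightarrow> zt (Suc m) (a # q) = zt m (a # q) + zt m q / real m ^ a"
proof -
  assume m: "1 \<le> m"
  have "{1..<Suc m} = insert m {1..<m}" using m by auto
  then show ?thesis by (simp add: add.commute)
qed

lemma sum_sum_list_swap: "(\<Sum>m\<in>M. sum_list (map (g m) L)) = sum_list (map (\<lambda>p. \<Sum>m\<in>M. g m p) L)"
  by (induction L) (simp_all add: sum.distrib)

lemma sum_list_div: "sum_list (map f L) / (c::real) = sum_list (map (\<lambda>x. f x / c) L)"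
  by (induction L) (simp_all add: add_divide_distrib)

lemma coarsen_ne': "p \<in> set (coarsen ks) \<Longrightarrow> ks \<noteq> [] \<Longrightarrow> p \<noteq> []"
  by (induction ks arbitrary: p rule: coarsen.induct) auto

lemma zst_coarsen: "zst N ks = sum_list (map (zt N) (coarsen ks))"
proof (induction ks arbitrary: N rule: coarsen.induct)
  case 1 then show ?case by simp
next
  case (2 k) then show ?case by simp
next
  case (3 k l ks)
  define C where "C = coarsen (l # ks)"
  have ne: "p \<noteq> []" if "p \<in> set C" for p using coarsen_ne' that C_def by blast
  have "zst N (k # l # ks) = (\<Sum>m\<in>{1..<N}. zst (Suc m) (l # ks) / real m ^ k)"
    by (simp only: zst.simps)
  also have "\<dots> = (\<Sum>m\<in>{1..<N}. sum_list (map (zt (Suc m)) C) / real m ^ k)"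
    by (simp only: 3 C_def)
  also have "\<dots> = (\<Sum>m\<in>{1..<N}. sum_list (map (\<lambda>p. zt m p / real m ^ k + zt m (tl p) / real m ^ (k + hd p)) C))"
  proof (rule sum.cong[OF refl])
    fix m assume m: "m \<in> {1..<N}"
    show "sum_list (map (zt (Suc m)) C) / real m ^ k
      = sum_list (map (\<lambda>p. zt m p / real m ^ k + zt m (tl p) / real m ^ (k + hd p)) C)"
      unfolding sum_list_div
    proof (rule arg_cong[where f=sum_list], rule map_cong[OF refl])
      fix p assume "p \<in> set C"
      then have "p \<noteq> []" using ne by blast
      then obtain a q where p: "p = a # q" by (cases p) auto
      show "zt (Suc m) p / real m ^ k = zt m p / real m ^ k + zt m (tl p) / real m ^ (k + hd p)"
        using m unfolding p by (simp add: zt_Suc add_divide_distrib power_add)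
    qed
  qed
  also have "\<dots> = sum_list (map (\<lambda>p. zt N (k # p) + zt N ((k + hd p) # tl p)) C)"
    by (simp add: sum_sum_list_swap sum.distrib)
  also have "\<dots> = sum_list (map (zt N) (coarsen (k # l # ks)))"
    by (simp add: C_def sum_list_addf o_def)
  finally show ?case .
qed

lemma tendsto_sum_list:
  fixes g :: "nat \<Rightarrow> 'a \<Rightarrow> real"
  shows "(\<And>x. x \<in> set L \<Longrightarrow> (\<lambda>N. g N x) \<longlonglongrightarrow> h x) \<Longrightarrow>
   (\<lambda>N. sum_list (map (g N) L)) \<longlonglongrightarrow> sum_list (map h L)"
proof (induction L)
  case (Cons a L)
  then have "(\<lambda>N. g N a) \<longlonglongrightarrow> h a" "(\<lambda>N. sum_list (map (g N) L)) \<longlonglongrightarrow> sum_list (map h L)" by auto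
  then show ?case by (simp add: tendsto_add)
qed simp

lemma coarsen_lb': "p \<in> set (coarsen ks) \<Longrightarrow> \<forall>x\<in>set ks. c \<le> x \<Longrightarrow> \<forall>x\<in>set p. c \<le> x"
proof (induction ks arbitrary: p rule: coarsen.induct)
  case (3 k l ks)
  from 3(3) obtain q where q: "q \<in> set (coarsen (l # ks))" and pq: "p = k # q \<or> p = (k + hd q) # tl q"
    by auto
  have qc: "\<forall>x\<in>set q. c \<le> x" using 3 q by auto
  have "q \<noteq> []" using coarsen_ne' q by blast
  then show ?case using pq qc 3(4) by (cases q) auto
qed auto

lemma zst_lim: assumes ks: "\<forall>x\<in>set ks. 2 \<le> x" shows "(\<lambda>N. zst N ks) \<longlonglongrightarrow> mzv_star ks"
proof -
  have L: "(\<lambda>N. zst N ks) \<longlonglongrightarrow> sum_list (map mzv (coarsen ks))"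
    unfolding zst_coarsen
    by (rule tendsto_sum_list, rule zt_lim) (use coarsen_lb'[of _ ks 2] ks in blast)
  have "infsum (Fk ks) (Ds ks) = sum_list (map mzv (coarsen ks))"
  proof (rule infsum_exhaust[where D="DSN ks"])
    show "finite (DSN ks N)" for N by (rule finite_DSN)
    show "DSN ks N \<subseteq> Ds ks" for N by (auto simp: DSN_def)
    show "N \<le> N' \<Longrightarrow> DSN ks N \<subseteq> DSN ks N'" for N N' by (auto simp: DSN_def)
    show "\<exists>N. x \<in> DSN ks N" if "x \<in> Ds ks" for x
      using that member_le_sum_list[of _ x] by (auto simp: DSN_def intro!: exI[of _ "Suc (sum_list x)"] le_imp_less_Suc)
    show "0 \<le> Fk ks x" for x by (rule Fk_nonneg)
    show "(\<lambda>N. sum (Fk ks) (DSN ks N)) \<longlonglongrightarrow> sum_list (map mzv (coarsen ks))"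
      using L by (simp add: zst_DSN)
  qed
  then show ?thesis using L by (simp add: mzv_star_eq)
qed


definition mp :: "rat poly \<Rightarrow> real poly" where "mp p = map_poly of_rat p"

lemma coeff_mp: "coeff (mp p) i = of_rat (coeff p i)" by (simp add: mp_def coeff_map_poly)
lemma mp_0[simp]: "mp 0 = 0" by (simp add: mp_def)
lemma mp_add: "mp (p + q) = mp p + mp q" by (rule poly_eqI) (simp add: coeff_mp of_rat_add)
lemma mp_diff: "mp (p - q) = mp p - mp q" by (rule poly_eqI) (simp add: coeff_mp of_rat_diff)
lemma mp_1[simp]: "mp 1 = 1" by (rule poly_eqI) (simp add: coeff_mp coeff_1)
lemma mp_mult: "mp (p * q) = mp p * mp q"
  by (rule poly_eqI) (simp add: coeff_mp coeff_mult of_rat_sum of_rat_mult)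
lemma mp_power: "mp (p ^ n) = mp p ^ n" by (induction n) (simp_all add: mp_mult)
lemma mp_tvar: "mp tvar = [:0, 1:]"
  by (rule poly_eqI) (simp add: coeff_mp tvar_def coeff_pCons split: nat.split)
lemma mp_tvar1: "mp (tvar - 1) = [:-1, 1:]"
  by (rule poly_eqI) (simp add: coeff_mp tvar_def coeff_pCons coeff_1 split: nat.split)

lemma pmult_const: "p * [:c:] = smult c p" by (simp add: mult.commute[of p])
lemma psmult_sum2: "smult c (\<Sum>i\<in>I. f i) = (\<Sum>i\<in>I. smult c (f i))"
  by (induction I rule: infinite_finite_induct) (simp_all add: smult_add_right)
lemma psmult_const: "smult c [:x:] = [:c * x:]" by simp

definition ZT :: "nat \<Rightarrow> nc \<Rightarrow> real poly" where
  "ZT N f = (\<Sum>w\<in>supp f. smult (zt N (idx w)) (mp (f w)))"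

lemma ZT_super: "finite F \<Longrightarrow> supp f \<subseteq> F \<Longrightarrow> ZT N f = (\<Sum>w\<in>F. smult (zt N (idx w)) (mp (f w)))"
  unfolding ZT_def by (rule sum.mono_neutral_left) (auto simp: supp_def)

lemma ZT_add: assumes "fin f" "fin g" shows "ZT N (f + g) = ZT N f + ZT N g"
proof -
  have F: "finite (supp f \<union> supp g)" using assms by (simp add: fin_def)
  have "ZT N (f + g) = (\<Sum>w\<in>supp f \<union> supp g. smult (zt N (idx w)) (mp ((f + g) w)))"
    by (rule ZT_super[OF F]) (auto simp: supp_def)
  also have "\<dots> = ZT N f + ZT N g"
    by (subst (1 2) ZT_super[OF F]) (auto simp: mp_add smult_add_right sum.distrib)
  finally show ?thesis .
qed

lemma ZT_smult: assumes "fin f" shows "ZT N (nc_smult c f) = mp c * ZT N f"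
proof -
  have F: "finite (supp f)" using assms by (simp add: fin_def)
  have "ZT N (nc_smult c f) = (\<Sum>w\<in>supp f. smult (zt N (idx w)) (mp (nc_smult c f w)))"
    by (rule ZT_super[OF F]) (rule supp_smult)
  also have "\<dots> = (\<Sum>w\<in>supp f. smult (zt N (idx w)) (mp (c * f w)))" by simp
  also have "\<dots> = mp c * ZT N f"
    by (simp add: ZT_def mp_mult sum_distrib_left)
  finally show ?thesis .
qed

lemma ZT_zero[simp]: "ZT N 0 = 0" by (simp add: ZT_def supp_def)

lemma ZT_sum: "finite I \<Longrightarrow> (\<And>i. i \<in> I \<Longrightarrow> fin (f i)) \<Longrightarrow> ZT N (\<Sum>i\<in>I. f i) = (\<Sum>i\<in>I. ZT N (f i))"
proof (induction I rule: finite_induct)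
  case (insert x F)
  have "ZT N (sum f (insert x F)) = ZT N (f x + sum f F)" by (simp only: sum.insert[OF insert.hyps])
  also have "\<dots> = ZT N (f x) + ZT N (sum f F)" by (rule ZT_add) (use insert in auto)
  also have "\<dots> = ZT N (f x) + (\<Sum>i\<in>F. ZT N (f i))" using insert by simp
  finally show ?case by (simp only: sum.insert[OF insert.hyps])
qed simp

lemma fin_sum_list: "(\<And>x. x \<in> set L \<Longrightarrow> fin (f x)) \<Longrightarrow> fin (sum_list (map f L))"
  by (induction L) auto

lemma ZT_sum_list: "(\<And>x. x \<in> set L \<Longrightarrow> fin (f x)) \<Longrightarrow>
   ZT N (sum_list (map f L)) = sum_list (map (\<lambda>x. ZT N (f x)) L)"
proof (induction L)
  case (Cons a L)
  have fs: "fin (sum_list (map f L))"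
    using Cons.prems by (intro fin_sum_list) auto
  have "ZT N (sum_list (map f (a # L))) = ZT N (f a + sum_list (map f L))" by (simp only: list.map sum_list.Cons)
  also have "\<dots> = ZT N (f a) + ZT N (sum_list (map f L))" by (rule ZT_add) (use Cons fs in auto)
  also have "\<dots> = ZT N (f a) + sum_list (map (\<lambda>x. ZT N (f x)) L)" using Cons by simp
  finally show ?case by (simp only: list.map sum_list.Cons)
qed simp

lemma ZT_wd: "ZT N (wd w) = [:zt N (idx w):]"
  by (simp add: ZT_def)

lemma ZT_cat: assumes a: "1 \<le> a" and P: "fin P"
  shows "ZT N (cat (zw a) P) = (\<Sum>m\<in>{1..<N}. smult (1 / real m ^ a) (ZT m P))"
proof -
  have F: "finite (supp P)" using P by (simp add: fin_def)
  have "ZT N (cat (zw a) P) = ZT N (\<Sum>v\<in>supp P. nc_smult (P v) (wd (z a @ v)))"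
    by (simp add: zw_def cat_expand[OF P])
  also have "\<dots> = (\<Sum>v\<in>supp P. mp (P v) * [:zt N (a # idx v):])"
    using F a by (simp add: ZT_sum ZT_smult ZT_wd idx_z_app)
  also have "\<dots> = (\<Sum>v\<in>supp P. \<Sum>m\<in>{1..<N}. smult (zt m (idx v) / real m ^ a) (mp (P v)))"
    by (simp add: pmult_const smult_sum)
  also have "\<dots> = (\<Sum>m\<in>{1..<N}. \<Sum>v\<in>supp P. smult (zt m (idx v) / real m ^ a) (mp (P v)))"
    by (rule sum.swap)
  also have "\<dots> = (\<Sum>m\<in>{1..<N}. smult (1 / real m ^ a) (ZT m P))"
    by (simp add: ZT_def psmult_sum2)
  finally show ?thesis .
qed

lemma zt_stuffle0:
  "zt N (a # k) * zt N (b # l) = (\<Sum>m\<in>{1..<N}. zt m k * zt m (b # l) / real m ^ a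
     + zt m (a # k) * zt m l / real m ^ b + zt m k * zt m l / real m ^ (a + b))"
proof (induction N)
  case 0 then show ?case by simp
next
  case (Suc N)
  show ?case
  proof (cases "N = 0")
    case True then show ?thesis by simp
  next
    case False
    then have N: "1 \<le> N" by simp
    have ins: "{1..<Suc N} = insert N {1..<N}" using N by auto
    define A where "A = zt N (a # k)"
    define B where "B = zt N (b # l)"
    define \<alpha> where "\<alpha> = zt N k / real N ^ a"
    define \<beta> where "\<beta> = zt N l / real N ^ b"
    have "zt (Suc N) (a # k) * zt (Suc N) (b # l) = (A + \<alpha>) * (B + \<beta>)"
      unfolding A_def B_def \<alpha>_def \<beta>_def using zt_Suc[OF N] by simp
    also have "\<dots> = A * B + (\<alpha> * B + A * \<beta> + \<alpha> * \<beta>)" by (simp add: algebra_simps)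
    also have "\<alpha> * \<beta> = zt N k * zt N l / real N ^ (a + b)"
      by (simp add: \<alpha>_def \<beta>_def power_add)
    finally show ?thesis
      unfolding ins using Suc by (simp add: A_def B_def \<alpha>_def \<beta>_def add.commute)
  qed
qed

lemma zt_stuffle:
  "zt N (a # k) * zt N (b # l) = (\<Sum>m\<in>{1..<N}. 1 / real m ^ a * (zt m k * zt m (b # l))
     + 1 / real m ^ b * (zt m (a # k) * zt m l) + 1 / real m ^ (a + b) * (zt m k * zt m l))"
  unfolding zt_stuffle0 by simp

lemma ZT_harm: "\<forall>x\<in>set k. 1 \<le> x \<Longrightarrow> \<forall>x\<in>set l. 1 \<le> x \<Longrightarrow> ZT N (harm_idx k l) = [:zt N k * zt N l:]"
proof (induction k l arbitrary: N rule: harm_idx.induct)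
  case (1 l) then show ?case by (simp add: ZT_wd idx_zs)
next
  case (2 a k) then show ?case by (simp add: ZT_wd idx_zs del: set_simps(2))
next
  case (3 a k b l)
  have a: "1 \<le> a" and b: "1 \<le> b" using 3 by auto
  have "ZT N (harm_idx (a # k) (b # l)) =
     ZT N (cat (zw a) (harm_idx k (b # l))) + ZT N (cat (zw b) (harm_idx (a # k) l))
     + ZT N (cat (zw (a + b)) (harm_idx k l))"
    by (simp add: nc_add_eq ZT_add fin_harm zw_def)
  also have "\<dots> = [:zt N (a # k) * zt N (b # l):]"
  proof -
    have I1: "ZT m (harm_idx k (b # l)) = [:zt m k * zt m (b # l):]" for m
      using 3(1) 3(4,5) by (simp del: zt.simps)
    have I2: "ZT m (harm_idx (a # k) l) = [:zt m (a # k) * zt m l:]" for m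
      using 3(2) 3(4,5) by (simp del: zt.simps)
    have I3: "ZT m (harm_idx k l) = [:zt m k * zt m l:]" for m
      using 3(3) 3(4,5) by (simp del: zt.simps)
    have ab: "1 \<le> a + b" using a by simp
    show ?thesis
      unfolding ZT_cat[OF a fin_harm] ZT_cat[OF b fin_harm] ZT_cat[OF ab fin_harm] I1 I2 I3 zt_stuffle
      by (simp add: sum.distrib sum_to_poly del: zt.simps)
  qed
  finally show ?case .
qed

lemma ZT_hprod: assumes f: "fin f" and g: "fin g" shows "ZT N (hprod f g) = ZT N f * ZT N g"
proof -
  have F: "finite (supp f)" "finite (supp g)" using f g by (auto simp: fin_def)
  have "ZT N (hprod f g) = (\<Sum>v\<in>supp f. \<Sum>w\<in>supp g. mp (f v * g w) * [:zt N (idx v) * zt N (idx w):])"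
  proof -
    have ZH: "ZT N (H v w) = [:zt N (idx v) * zt N (idx w):]" for v w
      by (rule ZT_harm) (rule idx_pos)+
    show ?thesis unfolding hprod_fun using F by (simp add: ZT_sum ZT_smult fin_harm ZH)
  qed
  also have "\<dots> = (\<Sum>v\<in>supp f. \<Sum>w\<in>supp g. smult (zt N (idx v)) (mp (f v)) * smult (zt N (idx w)) (mp (g w)))"
    by (simp add: pmult_const mp_mult mult_ac)
  also have "\<dots> = ZT N f * ZT N g"
    by (simp add: ZT_def sum_product)
  finally show ?thesis .
qed


lemma coeff_pc: "coeff [:c:] i = (if i = 0 then c else 0)" by (cases i) auto

lemma coeff_sum_list_const: "coeff (sum_list (map (\<lambda>p. A p * [:x p:]) L)) i = sum_list (map (\<lambda>p. coeff (A p) i * x p) L)"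
  by (induction L) (simp_all add: pmult_const mult.commute)

lemma lim_poly_form:
  fixes A :: "'a \<Rightarrow> real poly" and B :: "'b \<Rightarrow> 'c \<Rightarrow> real poly"
  assumes eq: "\<And>N. sum_list (map (\<lambda>p. A p * [:x N p:]) L) = [:y N:] + (\<Sum>j\<in>J. \<Sum>m\<in>M j. B j m * [:u N j m:])"
    and cx: "\<And>p. p \<in> set L \<Longrightarrow> (\<lambda>N. x N p) \<longlonglongrightarrow> x' p"
    and cy: "y \<longlonglongrightarrow> y'"
    and cu: "\<And>j m. j \<in> J \<Longrightarrow> m \<in> M j \<Longrightarrow> (\<lambda>N. u N j m) \<longlonglongrightarrow> u' j m"
  shows "sum_list (map (\<lambda>p. A p * [:x' p:]) L) = [:y':] + (\<Sum>j\<in>J. \<Sum>m\<in>M j. B j m * [:u' j m:])"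
proof (rule poly_eqI)
  fix i
  have c1: "(\<lambda>N. coeff (sum_list (map (\<lambda>p. A p * [:x N p:]) L)) i)
      \<longlonglongrightarrow> coeff (sum_list (map (\<lambda>p. A p * [:x' p:]) L)) i"
    unfolding coeff_sum_list_const
    by (rule tendsto_sum_list) (use cx in \<open>auto intro!: tendsto_mult_left\<close>)
  have c2: "(\<lambda>N. coeff ([:y N:] + (\<Sum>j\<in>J. \<Sum>m\<in>M j. B j m * [:u N j m:])) i)
      \<longlonglongrightarrow> coeff ([:y':] + (\<Sum>j\<in>J. \<Sum>m\<in>M j. B j m * [:u' j m:])) i"
    unfolding coeff_add coeff_sum pmult_const coeff_smult coeff_pc
    by (intro tendsto_add tendsto_sum tendsto_mult) (auto simp: cy cu)
  show "coeff (sum_list (map (\<lambda>p. A p * [:x' p:]) L)) i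
     = coeff ([:y':] + (\<Sum>j\<in>J. \<Sum>m\<in>M j. B j m * [:u' j m:])) i"
    using c1 c2 unfolding eq by (rule LIMSEQ_unique)
qed

lemma sum_list_pc: "sum_list (map (\<lambda>p. [:f p:]) L) = [:sum_list (map f L):]"
  by (induction L) simp_all

lemma ZT_S: assumes kk: "1 \<le> k"
  shows "ZT N (S_map s (wd (concat (replicate m (z k)))))
     = sum_list (map (\<lambda>p. mp (s ^ (m - length p)) * [:zt N p:]) (coarsen (replicate m k)))"
proof -
  have pos: "\<forall>x\<in>set p. 1 \<le> x" if "p \<in> set (coarsen (replicate m k))" for p
    using coarsen_lb'[OF that, of 1] kk by auto
  have "S_map s (wd (concat (replicate m (z k)))) = Pc k s m"
    using S_word_zkn_Pc[OF kk] by (simp add: S_map_wd zkn_def)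
  then show ?thesis
    unfolding Pc_def using pos
    by (simp add: ZT_sum_list ZT_smult ZT_wd idx_zs cong: map_cong)
qed

lemma ZT_B: assumes kk: "1 \<le> k"
  shows "ZT N (S_map 1 (wd (concat (replicate m (z k))))) = [:zst N (replicate m k):]"
  unfolding ZT_S[OF kk] zst_coarsen by (simp add: sum_list_pc)

lemma ZT_Gam: assumes kk: "1 \<le> k"
  shows "ZT N (Gam k m j) = [:\<Sum>is\<in>comps m j. zt N (map (\<lambda>i. i * k) is):]"
proof -
  have pos: "\<forall>x\<in>set (map (\<lambda>i. i * k) is). 1 \<le> x" if "is \<in> comps m j" for "is"
    using that kk by (auto simp: comps_def)
  show ?thesis unfolding Gam_def using pos
    by (simp add: ZT_sum ZT_wd idx_zs sum_to_poly)
qed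

lemma fin_S1: "1 \<le> k \<Longrightarrow> fin (S_map 1 (wd (concat (replicate m (z k)))))"
  by (simp add: S_map_zkn Ys_def)

theorem part3:
  assumes k2: "2 \<le> k"
  shows "mzv_t (replicate n k)
               = [:mzv_star (replicate n k):]
                 + (\<Sum>j\<in>{2..n}. \<Sum>m\<in>{1..j div 2}.
                      [:0, 1:] ^ (j - 2 * m) * [:-1, 1:] ^ m *
                      [:(\<Sum>is\<in>comps m j. mzv (map (\<lambda>i. i * k) is))
                         * mzv_star (replicate (n - j) k):])"
proof -
  have kk: "1 \<le> k" using k2 by simp
  define C where "C = coarsen (replicate n k)"
  define BB :: "nat \<Rightarrow> nat \<Rightarrow> real poly" where "BB j m = [:0, 1:] ^ (j - 2 * m) * [:-1, 1:] ^ m" for j m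
  have eqN: "sum_list (map (\<lambda>p. [:0, 1:] ^ (n - length p) * [:zt N p:]) C)
     = [:zst N (replicate n k):] + (\<Sum>j\<in>{2..n}. \<Sum>m\<in>{1..j div 2}.
        BB j m * [:(\<Sum>is\<in>comps m j. zt N (map (\<lambda>i. i * k) is)) * zst N (replicate (n - j) k):])" for N
  proof -
    let ?S = "\<lambda>s m. S_map s (wd (concat (replicate m (z k))))"
    have R: "(\<lambda>w. \<Sum>j\<in>{2..n}. \<Sum>m\<in>{1..j div 2}.
                      tvar ^ (j - 2 * m) * (tvar - 1) ^ m *
                      hprod (\<lambda>v. \<Sum>is\<in>comps m j. wd (zs (map (\<lambda>i. i * k) is)) v)
                            (?S 1 (n - j)) w)
      = (\<Sum>j\<in>{2..n}. \<Sum>m\<in>{1..j div 2}. nc_smult (tvar ^ (j - 2 * m) * (tvar - 1) ^ m)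
            (hprod (Gam k m j) (?S 1 (n - j))))"
      unfolding Gam_fun by (simp add: fun_eq_iff sum_fun_apply)
    have P2: "?S tvar n = ?S 1 n + (\<Sum>j\<in>{2..n}. \<Sum>m\<in>{1..j div 2}. nc_smult (tvar ^ (j - 2 * m) * (tvar - 1) ^ m)
            (hprod (Gam k m j) (?S 1 (n - j))))"
      using part2[OF kk, of n] unfolding R nc_add_eq .
    have "ZT N (?S tvar n) = ZT N (?S 1 n) + (\<Sum>j\<in>{2..n}. \<Sum>m\<in>{1..j div 2}.
        mp (tvar ^ (j - 2 * m) * (tvar - 1) ^ m) * (ZT N (Gam k m j) * ZT N (?S 1 (n - j))))"
      unfolding P2 using fin_S1[OF kk]
      by (simp add: ZT_add ZT_sum ZT_smult ZT_hprod)
    then show ?thesis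
      unfolding ZT_B[OF kk] ZT_Gam[OF kk] unfolding ZT_S[OF kk] C_def[symmetric] BB_def
      by (simp add: mp_power mp_tvar mp_mult mp_tvar1 mult_to_poly mult.commute)
  qed
  have pC: "\<forall>x\<in>set p. 2 \<le> x" if "p \<in> set C" for p
    using coarsen_lb'[of p "replicate n k" 2] that k2 by (auto simp: C_def)
  have pG: "\<forall>x\<in>set (map (\<lambda>i. i * k) is). 2 \<le> x" if "is \<in> comps m j" for "is" m j
  proof
    fix x assume "x \<in> set (map (\<lambda>i. i * k) is)"
    then obtain i where "i \<in> set is" "x = i * k" by auto
    moreover have "2 \<le> i" using that \<open>i \<in> set is\<close> by (auto simp: comps_def)
    ultimately show "2 \<le> x" using kk by (metis le_trans mult_le_mono nat_mult_1_right)
  qed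
  have pR: "\<forall>x\<in>set (replicate m k). 2 \<le> x" for m using k2 by simp
  have lim: "sum_list (map (\<lambda>p. [:0, 1:] ^ (n - length p) * [:mzv p:]) C)
     = [:mzv_star (replicate n k):] + (\<Sum>j\<in>{2..n}. \<Sum>m\<in>{1..j div 2}.
        BB j m * [:(\<Sum>is\<in>comps m j. mzv (map (\<lambda>i. i * k) is)) * mzv_star (replicate (n - j) k):])"
  proof (rule lim_poly_form[OF eqN])
    show "(\<lambda>N. zt N p) \<longlonglongrightarrow> mzv p" if "p \<in> set C" for p using zt_lim pC that by blast
    show "(\<lambda>N. zst N (replicate n k)) \<longlonglongrightarrow> mzv_star (replicate n k)" using zst_lim pR by blast
    show "(\<lambda>N. (\<Sum>is\<in>comps m j. zt N (map (\<lambda>i. i * k) is)) * zst N (replicate (n - j) k))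
      \<longlonglongrightarrow> (\<Sum>is\<in>comps m j. mzv (map (\<lambda>i. i * k) is)) * mzv_star (replicate (n - j) k)" for j m
      by (intro tendsto_mult tendsto_sum zt_lim zst_lim pR) (rule pG)
  qed
  have "mzv_t (replicate n k) = sum_list (map (\<lambda>p. [:0, 1:] ^ (n - length p) * [:mzv p:]) C)"
    by (simp add: mzv_t_def C_def monom_altdef pmult_const)
  also note lim
  finally show ?thesis by (simp add: BB_def mult.assoc)
qed

theorem corollary4p9:
  fixes k :: nat
  assumes "1 \<le> k"
  shows "(\<forall>n. ser_S tvar (geom (zu k)) n
               = ser_harm (geom (Xser k)) (ser_S 1 (geom (zu k))) n)
       \<and> (\<forall>n. S_map tvar (wd (concat (replicate n (z k))))
               = nc_add (S_map 1 (wd (concat (replicate n (z k)))))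
                   (\<lambda>w. \<Sum>j\<in>{2..n}. \<Sum>m\<in>{1..j div 2}.
                      tvar ^ (j - 2 * m) * (tvar - 1) ^ m *
                      hprod (\<lambda>v. \<Sum>is\<in>comps m j. wd (zs (map (\<lambda>i. i * k) is)) v)
                            (S_map 1 (wd (concat (replicate (n - j) (z k))))) w))
       \<and> (2 \<le> k \<longrightarrow> (\<forall>n. mzv_t (replicate n k)
               = [:mzv_star (replicate n k):]
                 + (\<Sum>j\<in>{2..n}. \<Sum>m\<in>{1..j div 2}.
                      [:0, 1:] ^ (j - 2 * m) * [:-1, 1:] ^ m *
                      [:(\<Sum>is\<in>comps m j. mzv (map (\<lambda>i. i * k) is))
                         * mzv_star (replicate (n - j) k):])))"
  using part1[OF assms] part2[OF assms] part3 by blast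


end
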